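(* Let $(X_n)$ be a stationary discrete-in-time Markov process on $\mathbb{R}^d$ with positive transition density $p(x,y)$, ergodic with respect to a unique invariant probability $\mu(\mathrm{d}x)=\pi(x)\mathrm{d}x$, $\pi>0$ (reversibility is not assumed). Let $A,B\subset\mathbb{R}^d$ be disjoint closed sets with smooth boundaries such that $(A\cup B)^c\ne\emptyset$, let $k_{AB}$ be the transition rate from $A$ to $B$, $k_{BA}$ the rate from $B$ to $A$, and $q$ the forward committor. Then: (1) $k_{AB}=k_{BA}$; (2) $k_{AB}=\int_A\left[\int_{\mathbb{R}^d}p(x,y)q(y)\,\mathrm{d}y\right]\mu(\mathrm{d}x)=\int_B\left[\int_{\mathbb{R}^d}p(x,y)(1-q(y))\,\mathrm{d}y\right]\mu(\mathrm{d}x)$; (3) $k_{AB}=\mathcal{E}(q)=\frac12\int_{\mathbb{R}^d}\left[\int_{\mathbb{R}^d}p(x,y)(q(y)-q(x))^2\,\mathrm{d}y\right]\mu(\mathrm{d}x)$.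
   Context: A trajectory segment $X_m,X_{m+1},\dots,X_{m+j}$ ($m\ge0$, $j\ge1$) is reactive (from $A$ to $B$) if $X_m\in A$, $X_{m+j}\in B$ and $X_i\in(A\cup B)^c$ for $m<i<m+j$. With $M_N^R$ the number of reactive segments starting within the first $N$ steps of a trajectory, $k_{AB}=\lim_{N\to\infty}M_N^R/N$; $k_{BA}$ is defined symmetrically. The committor is $q(x)=\mathbb{P}(\text{starting from }x,\ X_n\text{ enters }B\text{ before }A)$; it satisfies $(\mathcal{T}q)(x)=q(x)$ on $(A\cup B)^c$, $q|_A\equiv0$, $q|_B\equiv1$, where $(\mathcal{T}f)(x)=\int p(x,y)f(y)\,\mathrm{d}y$. $\mathcal{E}(f)=\frac12\int\int(f(y)-f(x))^2p(x,y)\,\mathrm{d}y\,\mu(\mathrm{d}x)$. *)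

theory Defs
  imports "HOL-Probability.Probability"
begin

fun Cn_on :: "nat \<Rightarrow> ('a::euclidean_space) set \<Rightarrow> ('a \<Rightarrow> real) \<Rightarrow> bool" where
  "Cn_on 0 U f = continuous_on U f"
| "Cn_on (Suc n) U f =
     ((\<forall>x\<in>U. f differentiable (at x)) \<and>
      (\<forall>i\<in>Basis. Cn_on n U (\<lambda>x. frechet_derivative f (at x) i)))"

definition smooth_on :: "('a::euclidean_space) set \<Rightarrow> ('a \<Rightarrow> real) \<Rightarrow> bool" where
  "smooth_on U f \<longleftrightarrow> (\<forall>n. Cn_on n U f)"

definition smooth_boundary :: "('a::euclidean_space) set \<Rightarrow> bool" where
  "smooth_boundary A \<longleftrightarrow>
     (\<forall>z\<in>frontier A. \<exists>U f. open U \<and> z \<in> U \<and> smooth_on U f \<and>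
        (\<exists>v. frechet_derivative f (at z) v \<noteq> 0) \<and> A \<inter> U = {x\<in>U. f x \<le> 0})"

text \<open>path_prob p n C x = P_x(X_1 \<in> C 0, ..., X_n \<in> C (n-1)) for the chain with
  transition density p started at x.\<close>
fun path_prob :: "('a::euclidean_space \<Rightarrow> 'a \<Rightarrow> real) \<Rightarrow> nat \<Rightarrow> (nat \<Rightarrow> 'a set) \<Rightarrow> 'a \<Rightarrow> real" where
  "path_prob p 0 C x = 1"
| "path_prob p (Suc n) C x =
     (LINT y|lborel. indicator (C 0) y * p x y * path_prob p n (\<lambda>i. C (Suc i)) y)"

text \<open>Forward committor: probability, starting from x, to enter B before A
  (q = 0 on A, q = 1 on B; otherwise the sum over the first entrance time n+1 into A \<union> B,
  with the entrance happening in B).\<close>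
definition committor :: "('a::euclidean_space \<Rightarrow> 'a \<Rightarrow> real) \<Rightarrow> 'a set \<Rightarrow> 'a set \<Rightarrow> 'a \<Rightarrow> real" where
  "committor p A B x =
     (if x \<in> A then 0 else if x \<in> B then 1
      else (\<Sum>n. path_prob p (Suc n) (\<lambda>i. if i < n then - (A \<union> B) else B) x))"

definition reactive :: "(nat \<Rightarrow> 'w \<Rightarrow> 'a) \<Rightarrow> 'a set \<Rightarrow> 'a set \<Rightarrow> nat \<Rightarrow> 'w \<Rightarrow> bool" where
  "reactive X A B m \<omega> \<longleftrightarrow>
     X m \<omega> \<in> A \<and> (\<exists>j\<ge>1. X (m + j) \<omega> \<in> B \<and> (\<forall>i. m < i \<and> i < m + j \<longrightarrow> X i \<omega> \<notin> A \<union> B))"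

definition num_reactive :: "(nat \<Rightarrow> 'w \<Rightarrow> 'a) \<Rightarrow> 'a set \<Rightarrow> 'a set \<Rightarrow> nat \<Rightarrow> 'w \<Rightarrow> nat" where
  "num_reactive X A B N \<omega> = card {m. m < N \<and> reactive X A B m \<omega>}"

definition ergodic_process :: "'w measure \<Rightarrow> (nat \<Rightarrow> 'w \<Rightarrow> 'a::topological_space) \<Rightarrow> bool" where
  "ergodic_process M X \<longleftrightarrow>
     (\<forall>S \<in> sets (Pi\<^sub>M UNIV (\<lambda>_. borel :: 'a measure)).
        (\<forall>f. f \<in> S \<longleftrightarrow> (\<lambda>n. f (Suc n)) \<in> S) \<longrightarrow>
        measure M {\<omega>\<in>space M. (\<lambda>n. X n \<omega>) \<in> S} \<in> {0, 1})"

end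

theory Submission
  imports Defs
begin


locale mk =
  fixes p :: "'a::euclidean_space \<Rightarrow> 'a \<Rightarrow> real" and \<pi> :: "'a \<Rightarrow> real"
  assumes p_meas: "(\<lambda>(x, y). p x y) \<in> borel_measurable (borel \<Otimes>\<^sub>M borel)"
    and p_pos: "\<And>x y. p x y > 0"
    and p_int: "\<And>x. integrable lborel (p x)"
    and p_norm: "\<And>x. (LINT y|lborel. p x y) = 1"
    and pi_meas: "\<pi> \<in> borel_measurable borel"
    and pi_pos: "\<And>x. \<pi> x > 0"
    and pi_int: "integrable lborel \<pi>"
    and pi_norm: "(LINT x|lborel. \<pi> x) = 1"
    and pi_invariant: "AE y in lborel. (LINT x|lborel. \<pi> x * p x y) = \<pi> y"
begin

lemma p_meas': "(\<lambda>(x, y). p x y) \<in> borel_measurable (N \<Otimes>\<^sub>M lborel)" if "sets N = sets borel"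
proof -
  have "sets (N \<Otimes>\<^sub>M lborel) = sets (borel \<Otimes>\<^sub>M borel)"
    by (intro sets_pair_measure_cong that) simp
  then show ?thesis using p_meas measurable_cong_sets by blast
qed

lemma p_meas2[measurable]: "(\<lambda>x. p (fst x) (snd x)) \<in> borel_measurable (borel \<Otimes>\<^sub>M lborel)"
  using p_meas'[of borel] by (simp add: case_prod_beta')

lemma meas_conv:
  fixes f :: "'x::topological_space \<times> 'y::topological_space \<Rightarrow> real"
  assumes "f \<in> borel_measurable (borel \<Otimes>\<^sub>M borel)" "sets N1 = sets borel" "sets N2 = sets borel"
  shows "f \<in> borel_measurable (N1 \<Otimes>\<^sub>M N2)"
proof -
  have "sets (N1 \<Otimes>\<^sub>M N2) = sets (borel \<Otimes>\<^sub>M borel)"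
    by (rule sets_pair_measure_cong[OF assms(2,3)])
  then have eq: "measurable (N1 \<Otimes>\<^sub>M N2) borel = measurable (borel \<Otimes>\<^sub>M borel) (borel :: real measure)"
    by (rule measurable_cong_sets[OF _ refl])
  show ?thesis by (subst eq) (rule assms(1))
qed

lemma p_sw[measurable]: "(\<lambda>z. p (snd z) (fst z)) \<in> borel_measurable (borel \<Otimes>\<^sub>M lborel)"
proof -
  have "(\<lambda>z. (\<lambda>(x, y). p x y) ((\<lambda>(x,y). (y,x)) z)) \<in> borel_measurable (borel \<Otimes>\<^sub>M borel)"
    by (rule measurable_compose[OF measurable_pair_swap' p_meas])
  then have "(\<lambda>z. p (snd z) (fst z)) \<in> borel_measurable (borel \<Otimes>\<^sub>M borel)" by (simp add: case_prod_beta')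
  then show ?thesis by (rule meas_conv) auto
qed

lemma T_meas[measurable]:
  assumes [measurable]: "h \<in> borel_measurable borel"
  shows "(\<lambda>x. LINT y|lborel. p x y * h y) \<in> borel_measurable borel"
proof -
  have "(\<lambda>(x,y). p x y * h y) \<in> borel_measurable (borel \<Otimes>\<^sub>M lborel)"
    using p_meas2 by (simp add: case_prod_beta')
  then show ?thesis by (rule lborel.borel_measurable_lebesgue_integral)
qed

lemma T_int:
  assumes [measurable]: "h \<in> borel_measurable borel" and b: "\<And>y. \<bar>h y\<bar> \<le> c"
  shows "integrable lborel (\<lambda>y. p x y * h y)"
proof (rule Bochner_Integration.integrable_bound[where f="\<lambda>y. c * p x y"])
  show "integrable lborel (\<lambda>y. c * p x y)" using p_int by auto
  show "(\<lambda>y. p x y * h y) \<in> borel_measurable lborel"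
    using borel_measurable_integrable[OF p_int[of x]] by measurable
  show "AE y in lborel. norm (p x y * h y) \<le> norm (c * p x y)"
  proof (rule AE_I2)
    fix y
    have "\<bar>h y\<bar> \<le> \<bar>c\<bar>" using b[of y] by linarith
    then have "\<bar>p x y\<bar> * \<bar>h y\<bar> \<le> \<bar>p x y\<bar> * \<bar>c\<bar>" by (rule mult_left_mono) simp
    then show "norm (p x y * h y) \<le> norm (c * p x y)" by (simp add: abs_mult mult.commute)
  qed
qed

lemma pi_meas'[measurable]: "\<pi> \<in> borel_measurable lborel" using pi_meas by simp

lemma nn_p: "(\<integral>\<^sup>+y. ennreal (p x y) \<partial>lborel) = 1"
  using p_int[of x] p_norm[of x] p_pos
  by (subst nn_integral_eq_integral) (auto intro!: AE_I2 less_imp_le)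

lemma nn_pi: "(\<integral>\<^sup>+y. ennreal (\<pi> y) \<partial>lborel) = 1"
  using pi_int pi_norm pi_pos
  by (subst nn_integral_eq_integral) (auto intro!: AE_I2 less_imp_le)

lemma joint_int:
  assumes [measurable]: "h \<in> borel_measurable borel" and b: "\<And>y. \<bar>h y\<bar> \<le> c"
  shows "integrable (lborel \<Otimes>\<^sub>M lborel) (\<lambda>(x,y). \<pi> x * p x y * h y)"
proof (rule Bochner_Integration.integrable_bound[where f="\<lambda>(x,y). c * (\<pi> x * p x y)"])
  have m: "(\<lambda>(x,y). \<pi> x * p x y) \<in> borel_measurable (lborel \<Otimes>\<^sub>M lborel)"
    using p_meas'[of lborel] by (simp add: case_prod_beta') measurable
  have "(\<integral>\<^sup>+z. ennreal ((\<lambda>(x,y). \<pi> x * p x y) z) \<partial>(lborel \<Otimes>\<^sub>M lborel))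
      = (\<integral>\<^sup>+x. \<integral>\<^sup>+y. ennreal (\<pi> x * p x y) \<partial>lborel \<partial>lborel)"
    using m by (subst lborel.nn_integral_fst[symmetric]) (auto simp: case_prod_beta')
  also have "\<dots> = (\<integral>\<^sup>+x. ennreal (\<pi> x) * \<integral>\<^sup>+y. ennreal (p x y) \<partial>lborel \<partial>lborel)"
  proof (intro nn_integral_cong)
    fix x
    have "(\<lambda>y. ennreal (p x y)) \<in> borel_measurable lborel"
      using borel_measurable_integrable[OF p_int[of x]] by measurable
    then show "(\<integral>\<^sup>+y. ennreal (\<pi> x * p x y) \<partial>lborel) = ennreal (\<pi> x) * \<integral>\<^sup>+y. ennreal (p x y) \<partial>lborel"
      using pi_pos p_pos by (simp add: ennreal_mult less_imp_le nn_integral_cmult[symmetric])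
  qed
  also have "\<dots> = 1" by (simp add: nn_p nn_pi)
  finally have "integrable (lborel \<Otimes>\<^sub>M lborel) (\<lambda>(x,y). \<pi> x * p x y)"
    using m pi_pos p_pos by (intro integrableI_nonneg) (auto intro!: AE_I2 less_imp_le)
  then show "integrable (lborel \<Otimes>\<^sub>M lborel) (\<lambda>(x,y). c * (\<pi> x * p x y))"
    by (simp add: case_prod_beta')
  show "(\<lambda>(x,y). \<pi> x * p x y * h y) \<in> borel_measurable (lborel \<Otimes>\<^sub>M lborel)"
    using p_meas'[of lborel] by (simp add: case_prod_beta') measurable
  show "AE z in lborel \<Otimes>\<^sub>M lborel. norm ((\<lambda>(x,y). \<pi> x * p x y * h y) z) \<le> norm ((\<lambda>(x,y). c * (\<pi> x * p x y)) z)"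
  proof (rule AE_I2, clarify)
    fix x y
    have "\<bar>h y\<bar> \<le> \<bar>c\<bar>" using b[of y] by linarith
    then have "\<bar>\<pi> x * p x y\<bar> * \<bar>h y\<bar> \<le> \<bar>\<pi> x * p x y\<bar> * \<bar>c\<bar>" by (rule mult_left_mono) simp
    then show "norm (\<pi> x * p x y * h y) \<le> norm (c * (\<pi> x * p x y))" by (simp add: abs_mult mult.commute mult.left_commute)
  qed
qed

lemma inv:
  assumes [measurable]: "h \<in> borel_measurable borel" and b: "\<And>y. \<bar>h y\<bar> \<le> c"
  shows "(LINT x|lborel. \<pi> x * (LINT y|lborel. p x y * h y)) = (LINT y|lborel. \<pi> y * h y)"
proof -
  have F: "(LINT y|lborel. LINT x|lborel. \<pi> x * p x y * h y) = (LINT x|lborel. LINT y|lborel. \<pi> x * p x y * h y)"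
    using joint_int[OF assms] by (intro pair_sigma_finite.Fubini_integral) (auto simp: pair_sigma_finite_def lborel.sigma_finite_measure_axioms)
  have "(LINT x|lborel. \<pi> x * (LINT y|lborel. p x y * h y)) = (LINT x|lborel. LINT y|lborel. \<pi> x * p x y * h y)"
    by (intro Bochner_Integration.integral_cong refl) (simp add: mult.assoc)
  also have "\<dots> = (LINT y|lborel. LINT x|lborel. \<pi> x * p x y * h y)" using F by simp
  also have "\<dots> = (LINT y|lborel. h y * (LINT x|lborel. \<pi> x * p x y))"
    by (intro Bochner_Integration.integral_cong refl, subst integral_mult_right_zero[symmetric]) (simp add: ac_simps)
  also have "\<dots> = (LINT y|lborel. \<pi> y * h y)"
  proof (intro integral_cong_AE)
    have "(\<lambda>(y,x). \<pi> x * p x y) \<in> borel_measurable (borel \<Otimes>\<^sub>M lborel)"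
      using p_sw by (simp add: case_prod_beta') measurable
    then have "(\<lambda>y. LINT x|lborel. \<pi> x * p x y) \<in> borel_measurable borel"
      by (rule lborel.borel_measurable_lebesgue_integral[where f="\<lambda>y x. \<pi> x * p x y", simplified])
    then show "(\<lambda>y. h y * (LINT x|lborel. \<pi> x * p x y)) \<in> borel_measurable lborel" by simp
  qed (use pi_invariant in \<open>auto simp: mult.commute\<close>)
  finally show ?thesis .
qed

end

context mk begin

lemma T_bound:
  assumes [measurable]: "h \<in> borel_measurable borel" and b: "\<And>y. \<bar>h y\<bar> \<le> c"
  shows "\<bar>LINT y|lborel. p x y * h y\<bar> \<le> c"
proof -
  have "\<bar>LINT y|lborel. p x y * h y\<bar> \<le> (LINT y|lborel. \<bar>p x y * h y\<bar>)"
    by (rule integral_abs_bound)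
  also have "\<dots> \<le> (LINT y|lborel. c * p x y)"
  proof (rule integral_mono)
    show "integrable lborel (\<lambda>y. \<bar>p x y * h y\<bar>)" using T_int[OF assms] by auto
    show "integrable lborel (\<lambda>y. c * p x y)" using p_int by auto
    fix y
    have "\<bar>h y\<bar> \<le> c" by (rule b)
    then have "\<bar>p x y\<bar> * \<bar>h y\<bar> \<le> \<bar>p x y\<bar> * c" by (rule mult_left_mono) simp
    then show "\<bar>p x y * h y\<bar> \<le> c * p x y" using p_pos[of x y] by (simp add: abs_mult mult.commute)
  qed
  also have "\<dots> = c" using p_norm by simp
  finally show ?thesis .
qed

lemma pp_meas[measurable]:
  assumes C: "\<And>i. C i \<in> sets borel"
  shows "path_prob p n C \<in> borel_measurable borel"
  using C
proof (induction n arbitrary: C)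
  case 0 then show ?case by simp
next
  case (Suc n)
  have [measurable]: "C 0 \<in> sets borel" using Suc by simp
  have [measurable]: "path_prob p n (\<lambda>i. C (Suc i)) \<in> borel_measurable borel" using Suc by simp
  have "(\<lambda>x. LINT y|lborel. p x y * (indicator (C 0) y * path_prob p n (\<lambda>i. C (Suc i)) y)) \<in> borel_measurable borel"
    by (rule T_meas) measurable
  then show ?case by (simp add: ac_simps)
qed

lemma pp_bounds:
  assumes C: "\<And>i. C i \<in> sets borel"
  shows "0 \<le> path_prob p n C x \<and> path_prob p n C x \<le> 1"
  using C
proof (induction n arbitrary: C x)
  case 0 then show ?case by simp
next
  case (Suc n)
  have [measurable]: "C 0 \<in> sets borel" using Suc by simp
  have [measurable]: "path_prob p n (\<lambda>i. C (Suc i)) \<in> borel_measurable borel" using Suc by simp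
  define h where "h y = indicator (C 0) y * path_prob p n (\<lambda>i. C (Suc i)) y" for y
  have hm[measurable]: "h \<in> borel_measurable borel" unfolding h_def by measurable
  have hb: "0 \<le> h y \<and> h y \<le> 1" for y using Suc.IH[of "\<lambda>i. C (Suc i)" y] Suc.prems
    by (auto simp: h_def indicator_def)
  have eq: "path_prob p (Suc n) C x = (LINT y|lborel. p x y * h y)" by (simp add: h_def ac_simps)
  have "\<bar>LINT y|lborel. p x y * h y\<bar> \<le> 1" using hb by (intro T_bound[OF hm]) auto
  moreover have "0 \<le> (LINT y|lborel. p x y * h y)"
    using hb p_pos by (intro Bochner_Integration.integral_nonneg) (simp add: less_imp_le)
  ultimately show ?case using eq by simp
qed

lemma pp_cong:
  assumes "\<And>i. i < n \<Longrightarrow> C i = D i"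
  shows "path_prob p n C x = path_prob p n D x"
  using assms
proof (induction n arbitrary: C D x)
  case 0 then show ?case by simp
next
  case (Suc n)
  have "path_prob p n (\<lambda>i. C (Suc i)) y = path_prob p n (\<lambda>i. D (Suc i)) y" for y
    using Suc by (intro Suc.IH) auto
  moreover have "C 0 = D 0" using Suc by auto
  ultimately show ?case by simp
qed

end


locale mkAB = mk p \<pi> for p :: "'a::euclidean_space \<Rightarrow> 'a \<Rightarrow> real" and \<pi> +
  fixes A B :: "'a set"
  assumes A_m[measurable]: "A \<in> sets borel" and B_m[measurable]: "B \<in> sets borel" and AB: "A \<inter> B = {}"
begin

definition E :: "nat \<Rightarrow> nat \<Rightarrow> 'a set" where "E n = (\<lambda>i. if i < n then - (A \<union> B) else B)"
definition pt :: "nat \<Rightarrow> 'a \<Rightarrow> real" where "pt n = path_prob p (Suc n) (E n)"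
definition Q :: "'a \<Rightarrow> real" where "Q x = (\<Sum>n. pt n x)"

lemma E_m[measurable]: "E n i \<in> sets borel" unfolding E_def by auto

lemma pt_m[measurable]: "pt n \<in> borel_measurable borel" unfolding pt_def by measurable

lemma pt_b: "0 \<le> pt n x" "pt n x \<le> 1" unfolding pt_def using pp_bounds[of "E n", OF E_m] by (simp_all del: path_prob.simps)

lemma T_nonneg:
  assumes "\<And>y. 0 \<le> h y" shows "0 \<le> (LINT y|lborel. p x y * h y)"
  using assms p_pos by (intro Bochner_Integration.integral_nonneg) (simp add: less_imp_le)

lemma pt_0: "pt 0 x = (LINT y|lborel. p x y * indicator B y)"
  by (simp add: pt_def E_def ac_simps)

lemma pt_Suc: "pt (Suc n) x = (LINT y|lborel. p x y * (indicator (-(A\<union>B)) y * pt n y))"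
proof -
  have "(\<lambda>i. E (Suc n) (Suc i)) = E n" by (auto simp: E_def)
  then show ?thesis by (simp add: pt_def E_def ac_simps)
qed

lemma s_rec: "(\<Sum>n<Suc N. pt n x) = (LINT y|lborel. p x y * (indicator B y + indicator (-(A\<union>B)) y * (\<Sum>n<N. pt n y)))"
proof -
  have i1: "integrable lborel (\<lambda>y. p x y * indicator B y)"
    by (rule T_int[where c=1]) auto
  have i2: "integrable lborel (\<lambda>y. p x y * (indicator (-(A\<union>B)) y * pt n y))" for n
    by (rule T_int[where c=1]) (use pt_b in \<open>auto simp: indicator_def\<close>)
  have "(\<Sum>n<Suc N. pt n x) = pt 0 x + (\<Sum>n<N. pt (Suc n) x)"
    by (rule sum.lessThan_Suc_shift)
  also have "(\<Sum>n<N. pt (Suc n) x) = (\<Sum>n<N. LINT y|lborel. p x y * (indicator (-(A\<union>B)) y * pt n y))"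
    by (simp add: pt_Suc)
  also have "\<dots> = (LINT y|lborel. (\<Sum>n<N. p x y * (indicator (-(A\<union>B)) y * pt n y)))"
    using Bochner_Integration.integral_sum[where I="{..<N}" and f="\<lambda>n y. p x y * (indicator (-(A\<union>B)) y * pt n y)"] i2 by (simp del: integral_sum')
  also have "pt 0 x + \<dots> = (LINT y|lborel. p x y * indicator B y + (\<Sum>n<N. p x y * (indicator (-(A\<union>B)) y * pt n y)))"
    using i1 i2 by (simp add: pt_0)
  also have "\<dots> = (LINT y|lborel. p x y * (indicator B y + indicator (-(A\<union>B)) y * (\<Sum>n<N. pt n y)))"
    by (intro Bochner_Integration.integral_cong refl) (simp only: sum_distrib_left distrib_left)
  finally show ?thesis .
qed

lemma s_b: "0 \<le> (\<Sum>n<N. pt n x) \<and> (\<Sum>n<N. pt n x) \<le> 1"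
proof (induction N arbitrary: x)
  case 0 then show ?case by simp
next
  case (Suc N)
  define h where "h y = indicator B y + indicator (-(A\<union>B)) y * (\<Sum>n<N. pt n y)" for y
  have hm: "h \<in> borel_measurable borel" unfolding h_def by measurable
  have hb: "0 \<le> h y \<and> h y \<le> 1" for y using Suc.IH[of y] AB by (auto simp: h_def indicator_def)
  have "\<bar>LINT y|lborel. p x y * h y\<bar> \<le> 1" using hb by (intro T_bound[OF hm]) auto
  moreover have "0 \<le> (LINT y|lborel. p x y * h y)" using hb by (intro T_nonneg) auto
  ultimately show ?case unfolding s_rec h_def[symmetric] by simp
qed

lemma pt_summable: "summable (\<lambda>n. pt n x)"
  by (rule summableI_nonneg_bounded[where x=1]) (use pt_b s_b in auto)

lemma Q_sums: "(\<lambda>n. pt n x) sums Q x" unfolding Q_def using pt_summable by (simp add: summable_sums)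

lemma Q_m[measurable]: "Q \<in> borel_measurable borel" unfolding Q_def by measurable

lemma Q_b: "0 \<le> Q x" "Q x \<le> 1"
proof -
  have "(\<lambda>N. \<Sum>n<N. pt n x) \<longlonglongrightarrow> Q x" using Q_sums by (simp add: sums_def)
  then show "0 \<le> Q x" "Q x \<le> 1" using s_b
    by (auto intro: LIMSEQ_le_const LIMSEQ_le_const2)
qed

lemma committor_eq: "committor p A B y = indicator B y + indicator (-(A\<union>B)) y * Q y"
  using AB by (auto simp: committor_def Q_def pt_def E_def indicator_def)

lemma q_m[measurable]: "committor p A B \<in> borel_measurable borel"
  unfolding committor_eq[abs_def] by measurable

lemma q_b: "0 \<le> committor p A B y" "committor p A B y \<le> 1"
  using Q_b[of y] AB by (auto simp: committor_eq indicator_def)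

lemma TQ: "(LINT y|lborel. p x y * committor p A B y) = Q x"
proof -
  have "(\<lambda>N. \<Sum>n<N. pt n x) \<longlonglongrightarrow> Q x"
    using Q_sums by (simp add: sums_def)
  from LIMSEQ_Suc[OF this] have "(\<lambda>N. \<Sum>n<Suc N. pt n x) \<longlonglongrightarrow> Q x" .
  moreover have "(\<lambda>N. \<Sum>n<Suc N. pt n x) \<longlonglongrightarrow> (LINT y|lborel. p x y * committor p A B y)"
    unfolding s_rec
  proof (rule integral_dominated_convergence[where w="p x"])
    show "(\<lambda>y. p x y * committor p A B y) \<in> borel_measurable lborel"
      using borel_measurable_integrable[OF p_int[of x]] by measurable
    show "(\<lambda>y. p x y * (indicator B y + indicator (-(A\<union>B)) y * (\<Sum>n<N. pt n y))) \<in> borel_measurable lborel" for N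
      using borel_measurable_integrable[OF p_int[of x]] by measurable
    show "integrable lborel (p x)" by (rule p_int)
    show "AE y in lborel. (\<lambda>N. p x y * (indicator B y + indicator (-(A\<union>B)) y * (\<Sum>n<N. pt n y))) \<longlonglongrightarrow> p x y * committor p A B y"
      unfolding committor_eq using Q_sums by (intro AE_I2 tendsto_intros) (simp add: sums_def)
    show "AE y in lborel. norm (p x y * (indicator B y + indicator (-(A\<union>B)) y * (\<Sum>n<N. pt n y))) \<le> p x y" for N
    proof (rule AE_I2)
      fix y
      have "0 \<le> indicator B y + indicator (-(A\<union>B)) y * (\<Sum>n<N. pt n y) \<and> indicator B y + indicator (-(A\<union>B)) y * (\<Sum>n<N. pt n y) \<le> (1::real)"
        using s_b[where N=N and x=y] AB by (auto simp: indicator_def)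
      then show "norm (p x y * (indicator B y + indicator (-(A\<union>B)) y * (\<Sum>n<N. pt n y))) \<le> p x y"
        using p_pos[of x y] by (auto simp: abs_mult intro!: mult_left_le)
    qed
  qed
  ultimately show ?thesis using LIMSEQ_unique by blast
qed

lemma Tq_eq: "x \<notin> A \<Longrightarrow> x \<notin> B \<Longrightarrow> (LINT y|lborel. p x y * committor p A B y) = committor p A B x"
  unfolding TQ by (simp add: committor_eq)

end

context mkAB begin

abbreviation q where "q \<equiv> committor p A B"
definition Tq where "Tq x = (LINT y|lborel. p x y * q y)"

lemma Tq_m[measurable]: "Tq \<in> borel_measurable borel" unfolding Tq_def by (rule T_meas) simp
lemma Tq_b: "\<bar>Tq x\<bar> \<le> 1" unfolding Tq_def using q_b by (intro T_bound) auto
lemma Tq_nn: "0 \<le> Tq x" unfolding Tq_def using q_b by (intro T_nonneg) auto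

lemma pi_bint:
  assumes [measurable]: "h \<in> borel_measurable borel" and b: "\<And>y. \<bar>h y\<bar> \<le> c"
  shows "integrable lborel (\<lambda>x. \<pi> x * h x)"
proof (rule Bochner_Integration.integrable_bound[where f="\<lambda>x. c * \<pi> x"])
  show "integrable lborel (\<lambda>x. c * \<pi> x)" using pi_int by auto
  show "(\<lambda>x. \<pi> x * h x) \<in> borel_measurable lborel" by measurable
  show "AE x in lborel. norm (\<pi> x * h x) \<le> norm (c * \<pi> x)"
  proof (rule AE_I2)
    fix x
    have "\<bar>h x\<bar> \<le> \<bar>c\<bar>" using b[of x] by linarith
    then have "\<bar>\<pi> x\<bar> * \<bar>h x\<bar> \<le> \<bar>\<pi> x\<bar> * \<bar>c\<bar>" by (rule mult_left_mono) simp
    then show "norm (\<pi> x * h x) \<le> norm (c * \<pi> x)" by (simp add: abs_mult mult.commute)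
  qed
qed

lemma T1q: "(LINT y|lborel. p x y * (1 - q y)) = 1 - Tq x"
proof -
  have "(LINT y|lborel. p x y * (1 - q y)) = (LINT y|lborel. p x y - p x y * q y)"
    by (simp add: algebra_simps)
  also have "\<dots> = (LINT y|lborel. p x y) - Tq x"
    unfolding Tq_def using p_int T_int[of q 1] q_b by (intro Bochner_Integration.integral_diff) auto
  finally show ?thesis using p_norm by simp
qed

lemma ptw1: "Tq x - q x = indicator A x * Tq x + indicator B x * (Tq x - 1)"
  using Tq_eq[of x] AB unfolding Tq_def by (auto simp: committor_def indicator_def)

lemma ptw2: "q x * (q x - Tq x) = indicator B x * (1 - Tq x)"
  using Tq_eq[of x] AB unfolding Tq_def by (auto simp: committor_def indicator_def)

lemma int_ind: "integrable lborel (\<lambda>x. \<pi> x * (indicator S x * h x))"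
  if [measurable]: "S \<in> sets borel" "h \<in> borel_measurable borel" and "\<And>x. \<bar>h x\<bar> \<le> c" for S h c
proof -
  have "0 \<le> c" using that(3)[of undefined] by linarith
  then show ?thesis by (intro pi_bint[where c=c]) (use that in \<open>auto simp: indicator_def\<close>)
qed

lemma claimB:
  "(LINT x|lborel. indicator A x * \<pi> x * (LINT y|lborel. p x y * q y)) =
   (LINT x|lborel. indicator B x * \<pi> x * (LINT y|lborel. p x y * (1 - q y)))"
proof -
  have i1: "integrable lborel (\<lambda>x. \<pi> x * (indicator A x * Tq x))"
    by (rule int_ind[where c=1]) (auto intro: Tq_b)
  have i2: "integrable lborel (\<lambda>x. \<pi> x * (indicator B x * (Tq x - 1)))"
    by (rule int_ind[where c=1]) (use Tq_b Tq_nn in \<open>auto simp: abs_le_iff\<close>)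
  have i3: "integrable lborel (\<lambda>x. \<pi> x * Tq x)" by (rule pi_bint[where c=1]) (auto intro: Tq_b)
  have i4: "integrable lborel (\<lambda>x. \<pi> x * q x)" by (rule pi_bint[where c=1]) (use q_b in auto)
  have "(LINT x|lborel. \<pi> x * Tq x) = (LINT x|lborel. \<pi> x * q x)"
    unfolding Tq_def by (rule inv[where c=1]) (use q_b in auto)
  then have "0 = (LINT x|lborel. \<pi> x * Tq x - \<pi> x * q x)"
    using i3 i4 by simp
  also have "\<dots> = (LINT x|lborel. \<pi> x * (indicator A x * Tq x) + \<pi> x * (indicator B x * (Tq x - 1)))"
    by (intro Bochner_Integration.integral_cong refl) (metis ptw1 right_diff_distrib distrib_left)
  also have "\<dots> = (LINT x|lborel. \<pi> x * (indicator A x * Tq x)) + (LINT x|lborel. \<pi> x * (indicator B x * (Tq x - 1)))"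
    using i1 i2 by simp
  finally have *: "(LINT x|lborel. \<pi> x * (indicator A x * Tq x)) = - (LINT x|lborel. \<pi> x * (indicator B x * (Tq x - 1)))"
    by linarith
  have "(LINT x|lborel. indicator B x * \<pi> x * (LINT y|lborel. p x y * (1 - q y)))
      = (LINT x|lborel. - (\<pi> x * (indicator B x * (Tq x - 1))))"
    unfolding T1q by (intro Bochner_Integration.integral_cong refl) (simp add: algebra_simps)
  also have "\<dots> = (LINT x|lborel. \<pi> x * (indicator A x * Tq x))" using * by simp
  also have "\<dots> = (LINT x|lborel. indicator A x * \<pi> x * (LINT y|lborel. p x y * q y))"
    unfolding Tq_def by (intro Bochner_Integration.integral_cong refl) (simp add: algebra_simps)
  finally show ?thesis by simp
qed

definition Tq2 where "Tq2 x = (LINT y|lborel. p x y * (q y)^2)"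

lemma q2_b: "\<bar>(q y)^2\<bar> \<le> 1" using q_b[of y] by (simp add: abs_le_iff power_le_one)

lemma Tq2_m[measurable]: "Tq2 \<in> borel_measurable borel" unfolding Tq2_def by (rule T_meas) simp
lemma Tq2_b: "\<bar>Tq2 x\<bar> \<le> 1" unfolding Tq2_def using q2_b by (intro T_bound) auto

lemma inner: "(LINT y|lborel. p x y * (q y - q x)^2) = Tq2 x - 2 * q x * Tq x + (q x)^2"
proof -
  have ia: "integrable lborel (\<lambda>y. p x y * (q y)^2)" using q2_b by (intro T_int[where c=1]) auto
  have ib: "integrable lborel (\<lambda>y. p x y * q y)" using q_b by (intro T_int[where c=1]) (auto simp: abs_le_iff)
  have "(LINT y|lborel. p x y * (q y - q x)^2) = (LINT y|lborel. p x y * (q y)^2 - (2 * q x) * (p x y * q y) + (q x)^2 * p x y)"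
    by (intro Bochner_Integration.integral_cong refl) (simp add: power2_eq_square algebra_simps)
  also have "\<dots> = (LINT y|lborel. p x y * (q y)^2) - (2 * q x) * (LINT y|lborel. p x y * q y) + (q x)^2 * (LINT y|lborel. p x y)"
    using ia ib p_int[of x] by simp
  finally show ?thesis using p_norm[of x] by (simp add: Tq_def Tq2_def)
qed

lemma claimE:
  "(LINT x|lborel. indicator A x * \<pi> x * (LINT y|lborel. p x y * q y)) =
   1/2 * (LINT x|lborel. \<pi> x * (LINT y|lborel. p x y * (q y - q x)^2))"
proof -
  have b1: "\<bar>q x * Tq x\<bar> \<le> 1" for x using q_b[of x] Tq_b[of x] Tq_nn[of x]
    by (simp add: abs_mult mult_le_one)
  have i1: "integrable lborel (\<lambda>x. \<pi> x * Tq2 x)" by (rule pi_bint[where c=1]) (auto intro: Tq2_b)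
  have i2: "integrable lborel (\<lambda>x. \<pi> x * (q x * Tq x))" by (rule pi_bint[where c=1]) (auto intro: b1)
  have i3: "integrable lborel (\<lambda>x. \<pi> x * (q x)^2)" by (rule pi_bint[where c=1, OF _ q2_b]) simp
  have i4: "integrable lborel (\<lambda>x. \<pi> x * (indicator B x * (1 - Tq x)))"
    by (rule int_ind[where c=1]) (use Tq_b Tq_nn in \<open>auto simp: abs_le_iff\<close>)
  have inv2: "(LINT x|lborel. \<pi> x * Tq2 x) = (LINT x|lborel. \<pi> x * (q x)^2)"
    unfolding Tq2_def by (rule inv[where c=1, OF _ q2_b]) simp
  have "(LINT x|lborel. \<pi> x * (LINT y|lborel. p x y * (q y - q x)^2))
      = (LINT x|lborel. \<pi> x * Tq2 x - 2 * (\<pi> x * (q x * Tq x)) + \<pi> x * (q x)^2)"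
    unfolding inner by (intro Bochner_Integration.integral_cong refl) (simp add: algebra_simps)
  also have "\<dots> = (LINT x|lborel. \<pi> x * Tq2 x) - 2 * (LINT x|lborel. \<pi> x * (q x * Tq x)) + (LINT x|lborel. \<pi> x * (q x)^2)"
    using i1 i2 i3 by simp
  also have "\<dots> = 2 * ((LINT x|lborel. \<pi> x * (q x)^2) - (LINT x|lborel. \<pi> x * (q x * Tq x)))"
    using inv2 by simp
  also have "(LINT x|lborel. \<pi> x * (q x)^2) - (LINT x|lborel. \<pi> x * (q x * Tq x)) = (LINT x|lborel. \<pi> x * (q x)^2 - \<pi> x * (q x * Tq x))"
    using i2 i3 by simp
  also have "\<dots> = (LINT x|lborel. \<pi> x * (indicator B x * (1 - Tq x)))"
  proof (intro Bochner_Integration.integral_cong refl)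
    fix x
    have "\<pi> x * (q x)^2 - \<pi> x * (q x * Tq x) = \<pi> x * (q x * (q x - Tq x))" by (simp add: power2_eq_square algebra_simps)
    then show "\<pi> x * (q x)^2 - \<pi> x * (q x * Tq x) = \<pi> x * (indicator B x * (1 - Tq x))" by (simp add: ptw2)
  qed
  also have "\<dots> = (LINT x|lborel. indicator B x * \<pi> x * (LINT y|lborel. p x y * (1 - q y)))"
    unfolding T1q by (intro Bochner_Integration.integral_cong refl) (simp add: algebra_simps)
  finally show ?thesis using claimB by simp
qed

end


lemma greedy:
  fixes h :: "nat \<Rightarrow> real"
  assumes h0: "\<And>i. 0 \<le> h i" and a0: "0 \<le> a"
    and cov: "\<And>m. \<exists>n. 1 \<le> n \<and> n \<le> K \<and> real n * a \<le> (\<Sum>i<n. h (m + i))"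
  shows "(real N - real K) * a \<le> (\<Sum>i<N. h i)"
proof -
  have main: "\<forall>m. N - m = d \<longrightarrow> m \<le> N \<longrightarrow> (real N - real m - real K) * a \<le> (\<Sum>i\<in>{m..<N}. h i)" for d
  proof (induction d rule: less_induct)
    case (less d)
    show ?case
    proof (intro allI impI)
      fix m assume d: "N - m = d" and mN: "m \<le> N"
      obtain n where n: "1 \<le> n" "n \<le> K" "real n * a \<le> (\<Sum>i<n. h (m + i))" using cov by blast
      have sn: "(\<Sum>i<n. h (m + i)) = (\<Sum>i\<in>{m..<m+n}. h i)"
        using sum.shift_bounds_nat_ivl[of h 0 m n] by (simp add: lessThan_atLeast0 add.commute)
      show "(real N - real m - real K) * a \<le> (\<Sum>i\<in>{m..<N}. h i)"
      proof (cases "m + n \<le> N")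
        case True
        have IH: "(real N - real (m+n) - real K) * a \<le> (\<Sum>i\<in>{m+n..<N}. h i)"
        proof -
          have "N - (m + n) < d" using True n(1) d by auto
          then have "\<forall>ma. N - ma = N - (m + n) \<longrightarrow> ma \<le> N \<longrightarrow> (real N - real ma - real K) * a \<le> (\<Sum>i\<in>{ma..<N}. h i)"
            by (rule less.IH)
          then show ?thesis using True by auto
        qed
        have split: "(\<Sum>i\<in>{m..<N}. h i) = (\<Sum>i\<in>{m..<m+n}. h i) + (\<Sum>i\<in>{m+n..<N}. h i)"
          using True by (intro sum.atLeastLessThan_concat[symmetric]) auto
        have "(real N - real m - real K) * a = real n * a + (real N - real (m+n) - real K) * a"
          by (simp add: algebra_simps)
        also have "\<dots> \<le> (\<Sum>i\<in>{m..<m+n}. h i) + (\<Sum>i\<in>{m+n..<N}. h i)"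
          using n(3) IH sn by linarith
        finally show ?thesis using split by simp
      next
        case False
        then have "real N - real m - real K \<le> 0" using n(2) by linarith
        then have "(real N - real m - real K) * a \<le> 0" using a0 by (simp add: mult_nonpos_nonneg)
        also have "0 \<le> (\<Sum>i\<in>{m..<N}. h i)" using h0 by (simp add: sum_nonneg)
        finally show ?thesis .
      qed
    qed
  qed
  show ?thesis using main[of N] by (auto simp: lessThan_atLeast0 dest: spec[of _ 0])
qed

abbreviation PP :: "('a::topological_space) itself \<Rightarrow> (nat \<Rightarrow> 'a) measure" where
  "PP _ \<equiv> Pi\<^sub>M UNIV (\<lambda>_. borel :: 'a measure)"

definition sh :: "nat \<Rightarrow> (nat \<Rightarrow> 'a) \<Rightarrow> nat \<Rightarrow> 'a" where "sh m f = (\<lambda>k. f (m + k))"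
definition Sg :: "((nat \<Rightarrow> 'a) \<Rightarrow> real) \<Rightarrow> nat \<Rightarrow> (nat \<Rightarrow> 'a) \<Rightarrow> real" where
  "Sg g n f = (\<Sum>i<n. g (sh i f))"

lemma sh_sh: "sh i (sh m f) = sh (m + i) f" by (auto simp: sh_def add.assoc)
lemma sh_0: "sh 0 f = f" by (simp add: sh_def)

lemma sh_meas[measurable]: "sh m \<in> measurable (PP TYPE('a::topological_space)) (PP TYPE('a))"
  unfolding sh_def by (rule measurable_PiM_single') (auto simp: space_PiM)

lemma Sg_meas[measurable]:
  assumes [measurable]: "g \<in> borel_measurable (PP TYPE('a::topological_space))"
  shows "Sg g n \<in> borel_measurable (PP TYPE('a))"
  unfolding Sg_def by measurable

lemma Sg_Suc: "Sg g (Suc N) f = g f + Sg g N (sh 1 f)"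
  unfolding Sg_def by (subst sum.lessThan_Suc_shift) (simp add: sh_sh sh_0)

lemma Sg_bounds: "(\<And>f. 0 \<le> g f \<and> g f \<le> 1) \<Longrightarrow> 0 \<le> Sg g N f \<and> Sg g N f \<le> N"
  unfolding Sg_def using sum_bounded_above[of "{..<N}" "\<lambda>i. g (sh i f)" 1]
  by (auto intro: sum_nonneg)



context mk begin

lemma shiftC:
  assumes C: "\<And>i. C i \<in> sets borel"
  shows "(LINT x|lborel. indicator ((\<lambda>j. if j < m then UNIV else C (j - m)) 0) x * \<pi> x *
            path_prob p (m + n) (\<lambda>i. (\<lambda>j. if j < m then UNIV else C (j - m)) (Suc i)) x)
       = (LINT x|lborel. indicator (C 0) x * \<pi> x * path_prob p n (\<lambda>i. C (Suc i)) x)"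
proof (induction m)
  case 0 then show ?case by simp
next
  case (Suc m)
  define D where "D = (\<lambda>j. if j < m then UNIV else C (j - m))"
  have D_m[measurable]: "D i \<in> sets borel" for i unfolding D_def using C by auto
  have sh: "(\<lambda>i. (\<lambda>j. if j < Suc m then UNIV else C (j - Suc m)) (Suc i)) = D"
    by (intro ext) (simp add: D_def)
  have h_m[measurable]: "(\<lambda>y. indicator (D 0) y * path_prob p (m + n) (\<lambda>i. D (Suc i)) y) \<in> borel_measurable borel"
    by measurable
  have h_b: "\<bar>indicator (D 0) y * path_prob p (m + n) (\<lambda>i. D (Suc i)) y\<bar> \<le> 1" for y
    using pp_bounds[of "\<lambda>i. D (Suc i)" "m+n" y] by (auto simp: indicator_def)
  have "(LINT x|lborel. indicator ((\<lambda>j. if j < Suc m then UNIV else C (j - Suc m)) 0) x * \<pi> x *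
            path_prob p (Suc m + n) (\<lambda>i. (\<lambda>j. if j < Suc m then UNIV else C (j - Suc m)) (Suc i)) x)
      = (LINT x|lborel. \<pi> x * path_prob p (Suc (m + n)) D x)"
    unfolding sh by simp
  also have "\<dots> = (LINT x|lborel. \<pi> x * (LINT y|lborel. p x y * (indicator (D 0) y * path_prob p (m + n) (\<lambda>i. D (Suc i)) y)))"
    by (simp add: ac_simps)
  also have "\<dots> = (LINT y|lborel. \<pi> y * (indicator (D 0) y * path_prob p (m + n) (\<lambda>i. D (Suc i)) y))"
    by (rule inv[OF h_m h_b])
  also have "\<dots> = (LINT x|lborel. indicator (D 0) x * \<pi> x * path_prob p (m + n) (\<lambda>i. D (Suc i)) x)"
    by (simp add: ac_simps)
  also have "\<dots> = (LINT x|lborel. indicator (C 0) x * \<pi> x * path_prob p n (\<lambda>i. C (Suc i)) x)"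
    using Suc unfolding D_def .
  finally show ?case .
qed

end

locale mkX = mk p \<pi> for p :: "'a::euclidean_space \<Rightarrow> 'a \<Rightarrow> real" and \<pi> +
  fixes M :: "'w measure" and X :: "nat \<Rightarrow> 'w \<Rightarrow> 'a"
  assumes M_prob: "prob_space M"
    and X_meas[measurable]: "\<And>n. X n \<in> borel_measurable M"
    and X_law: "\<And>n C. (\<forall>i. C i \<in> sets borel) \<Longrightarrow>
          measure M {\<omega>\<in>space M. \<forall>i\<le>n. X i \<omega> \<in> C i} =
          (LINT x|lborel. indicator (C 0) x * \<pi> x * path_prob p n (\<lambda>i. C (Suc i)) x)"
begin

interpretation P: prob_space M by (rule M_prob)

lemma space_PP: "space (PP TYPE('a)) = UNIV" by (simp add: space_PiM)

lemma shift_meas[measurable]: "(\<lambda>\<omega> k. X (m + k) \<omega>) \<in> measurable M (PP TYPE('a))"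
  by (rule measurable_PiM_single') (auto simp: space_PiM)

lemma fd_stat:
  assumes C: "\<And>i. C i \<in> sets borel"
  shows "measure M {\<omega>\<in>space M. \<forall>i\<le>n. X (m + i) \<omega> \<in> C i} = measure M {\<omega>\<in>space M. \<forall>i\<le>n. X i \<omega> \<in> C i}"
proof -
  define C' where "C' = (\<lambda>j. if j < m then UNIV else C (j - m))"
  have C'm: "\<forall>i. C' i \<in> sets borel" using C by (auto simp: C'_def)
  have "{\<omega>\<in>space M. \<forall>i\<le>n. X (m + i) \<omega> \<in> C i} = {\<omega>\<in>space M. \<forall>i\<le>m+n. X i \<omega> \<in> C' i}"
  proof safe
    fix \<omega> i assume "\<forall>i\<le>n. X (m + i) \<omega> \<in> C i" "i \<le> m + n"
    then show "X i \<omega> \<in> C' i" by (cases "i < m") (auto simp: C'_def dest: spec[of _ "i - m"])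
  next
    fix \<omega> i assume "\<forall>i\<le>m+n. X i \<omega> \<in> C' i" "i \<le> n"
    then show "X (m + i) \<omega> \<in> C i" by (auto simp: C'_def dest: spec[of _ "m + i"])
  qed
  then have "measure M {\<omega>\<in>space M. \<forall>i\<le>n. X (m + i) \<omega> \<in> C i}
      = (LINT x|lborel. indicator (C' 0) x * \<pi> x * path_prob p (m + n) (\<lambda>i. C' (Suc i)) x)"
    using X_law[OF C'm, of "m+n"] by simp
  also have "\<dots> = (LINT x|lborel. indicator (C 0) x * \<pi> x * path_prob p n (\<lambda>i. C (Suc i)) x)"
    unfolding C'_def by (rule shiftC[where C=C and m=m and n=n, OF C])
  also have "\<dots> = measure M {\<omega>\<in>space M. \<forall>i\<le>n. X i \<omega> \<in> C i}"
    using X_law[of C n] C by simp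
  finally show ?thesis .
qed

lemma stationary: "distr M (PP TYPE('a)) (\<lambda>\<omega> k. X (m + k) \<omega>) = distr M (PP TYPE('a)) (\<lambda>\<omega> k. X k \<omega>)"
proof (rule measure_eqI_PiM_infinite)
  show "sets (distr M (PP TYPE('a)) (\<lambda>\<omega> k. X (m + k) \<omega>)) = sets (PP TYPE('a))" by simp
  show "sets (distr M (PP TYPE('a)) (\<lambda>\<omega> k. X k \<omega>)) = sets (PP TYPE('a))" by simp
  show "finite_measure (distr M (PP TYPE('a)) (\<lambda>\<omega> k. X (m + k) \<omega>))"
    by (intro prob_space.finite_measure prob_space.prob_space_distr M_prob shift_meas)
  fix Aa :: "nat \<Rightarrow> 'a set" and J :: "nat set"
  assume J: "finite J" and Aa: "\<And>i. i \<in> J \<Longrightarrow> Aa i \<in> sets borel"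
  define n where "n = (if J = {} then 0 else Max J)"
  define C where "C i = (if i \<in> J then Aa i else UNIV)" for i
  have Cm: "C i \<in> sets borel" for i using Aa by (auto simp: C_def)
  have Jn: "i \<in> J \<Longrightarrow> i \<le> n" for i using J by (auto simp: n_def)
  have pe: "prod_emb UNIV (\<lambda>_. borel) J (Pi\<^sub>E J Aa) = {f. \<forall>i\<le>n. f i \<in> C i}"
    using Jn by (auto simp: prod_emb_def PiE_def Pi_def C_def extensional_def)
  have *: "emeasure (distr M (PP TYPE('a)) (\<lambda>\<omega> k. X (l + k) \<omega>)) (prod_emb UNIV (\<lambda>_. borel) J (Pi\<^sub>E J Aa))
     = ennreal (measure M {\<omega>\<in>space M. \<forall>i\<le>n. X (l + i) \<omega> \<in> C i})" for l
  proof -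
    have "prod_emb UNIV (\<lambda>_. borel) J (Pi\<^sub>E J Aa) \<in> sets (PP TYPE('a))"
      using J Aa by (intro sets_PiM_I) auto
    then have "emeasure (distr M (PP TYPE('a)) (\<lambda>\<omega> k. X (l + k) \<omega>)) (prod_emb UNIV (\<lambda>_. borel) J (Pi\<^sub>E J Aa))
        = emeasure M ((\<lambda>\<omega> k. X (l + k) \<omega>) -` prod_emb UNIV (\<lambda>_. borel) J (Pi\<^sub>E J Aa) \<inter> space M)"
      by (rule emeasure_distr[OF shift_meas])
    also have "(\<lambda>\<omega> k. X (l + k) \<omega>) -` prod_emb UNIV (\<lambda>_. borel) J (Pi\<^sub>E J Aa) \<inter> space M
        = {\<omega>\<in>space M. \<forall>i\<le>n. X (l + i) \<omega> \<in> C i}"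
      unfolding pe by auto
    finally show ?thesis by (simp add: P.emeasure_eq_measure)
  qed
  show "emeasure (distr M (PP TYPE('a)) (\<lambda>\<omega> k. X (m + k) \<omega>)) (prod_emb UNIV (\<lambda>_. borel) J (Pi\<^sub>E J Aa))
      = emeasure (distr M (PP TYPE('a)) (\<lambda>\<omega> k. X k \<omega>)) (prod_emb UNIV (\<lambda>_. borel) J (Pi\<^sub>E J Aa))"
    using *[of m] *[of 0] fd_stat[OF Cm, of n m] by simp
qed

end


locale ergp =
  fixes M :: "'w measure" and Y :: "nat \<Rightarrow> 'w \<Rightarrow> 'a::topological_space"
  assumes prob: "prob_space M"
    and Ym[measurable]: "\<And>n. Y n \<in> borel_measurable M"
    and stat: "\<And>m. distr M (PP TYPE('a)) (\<lambda>\<omega> k. Y (m + k) \<omega>) = distr M (PP TYPE('a)) (\<lambda>\<omega> k. Y k \<omega>)"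
    and erg: "ergodic_process M Y"
begin

interpretation P: prob_space M by (rule prob)

definition path :: "'w \<Rightarrow> nat \<Rightarrow> 'a" where "path \<omega> = (\<lambda>k. Y k \<omega>)"

lemma sh_path: "sh m (path \<omega>) = (\<lambda>k. Y (m + k) \<omega>)" by (simp add: sh_def path_def)

lemma shY_meas[measurable]: "(\<lambda>\<omega> k. Y (m + k) \<omega>) \<in> measurable M (PP TYPE('a))"
  by (rule measurable_PiM_single') (auto simp: space_PiM)

lemma path_meas[measurable]: "path \<in> measurable M (PP TYPE('a))"
  using shY_meas[of 0] by (simp add: path_def[abs_def])

lemma shpath_meas[measurable]: "(\<lambda>\<omega>. sh m (path \<omega>)) \<in> measurable M (PP TYPE('a))"
  unfolding sh_path by (rule shY_meas)

lemma int_bound: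
  fixes G :: "(nat \<Rightarrow> 'a) \<Rightarrow> real"
  assumes [measurable]: "G \<in> borel_measurable (PP TYPE('a))" and b: "\<And>f. \<bar>G f\<bar> \<le> c"
  shows "integrable M (\<lambda>\<omega>. G (sh m (path \<omega>)))" "integrable M (\<lambda>\<omega>. G (path \<omega>))"
  using b by (auto intro!: P.integrable_const_bound[where B=c])

lemma stat_int:
  fixes G :: "(nat \<Rightarrow> 'a) \<Rightarrow> real"
  assumes [measurable]: "G \<in> borel_measurable (PP TYPE('a))"
  shows "(\<integral>\<omega>. G (sh m (path \<omega>)) \<partial>M) = (\<integral>\<omega>. G (path \<omega>) \<partial>M)"
proof -
  have "(\<integral>\<omega>. G (sh m (path \<omega>)) \<partial>M) = integral\<^sup>L (distr M (PP TYPE('a)) (\<lambda>\<omega> k. Y (m + k) \<omega>)) G"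
    unfolding sh_path by (rule integral_distr[symmetric]) measurable
  also have "\<dots> = integral\<^sup>L (distr M (PP TYPE('a)) (\<lambda>\<omega> k. Y k \<omega>)) G" by (simp add: stat)
  also have "\<dots> = (\<integral>\<omega>. G (path \<omega>) \<partial>M)"
  proof -
    have e: "(\<lambda>\<omega> k. Y k \<omega>) = path" by (simp add: path_def[abs_def])
    show ?thesis unfolding e by (rule integral_distr[OF path_meas assms])
  qed
  finally show ?thesis .
qed

lemma cover:
  assumes gm[measurable]: "g \<in> borel_measurable (PP TYPE('a))" and gb: "\<And>f. 0 \<le> g f \<and> g f \<le> 1"
    and H: "AE \<omega> in M. \<exists>n\<ge>1. real n * a \<le> Sg g n (path \<omega>)"
  shows "a \<le> (\<integral>\<omega>. g (path \<omega>) \<partial>M)"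
proof (cases "a \<le> 0")
  case True
  have "0 \<le> (\<integral>\<omega>. g (path \<omega>) \<partial>M)" using gb by (intro Bochner_Integration.integral_nonneg) auto
  then show ?thesis using True by linarith
next
  case False
  then have a0: "0 < a" by simp
  define E where "E K = {f. \<forall>n. 1 \<le> n \<and> n \<le> K \<longrightarrow> Sg g n f < real n * a}" for K
  have E_m[measurable]: "E K \<in> sets (PP TYPE('a))" for K
  proof -
    have "E K = {f\<in>space (PP TYPE('a)). \<forall>n\<in>{1..K}. Sg g n f < real n * a}"
      by (auto simp: E_def space_PiM)
    also have "\<dots> \<in> sets (PP TYPE('a))" by measurable
    finally show ?thesis .
  qed
  define Ev where "Ev K = {\<omega>\<in>space M. path \<omega> \<in> E K}" for K
  have Ev_m: "Ev K \<in> sets M" for K unfolding Ev_def by measurable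
  have dec: "decseq Ev" by (intro decseq_SucI) (auto simp: Ev_def E_def)
  have "(\<lambda>K. measure M (Ev K)) \<longlonglongrightarrow> measure M (\<Inter>K. Ev K)"
    by (rule P.finite_Lim_measure_decseq) (use Ev_m dec in auto)
  moreover have "measure M (\<Inter>K. Ev K) = 0"
  proof -
    have "(\<Inter>K. Ev K) \<subseteq> {\<omega>\<in>space M. \<not> (\<exists>n\<ge>1. real n * a \<le> Sg g n (path \<omega>))}"
    proof (intro subsetI CollectI conjI notI)
      fix \<omega> assume "\<omega> \<in> (\<Inter>K. Ev K)"
      then have *: "\<omega> \<in> Ev K" for K by auto
      then show "\<omega> \<in> space M" by (auto simp: Ev_def)
      assume "\<exists>n\<ge>1. real n * a \<le> Sg g n (path \<omega>)"
      then obtain n where "1 \<le> n" "real n * a \<le> Sg g n (path \<omega>)" by auto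
      with *[of n] show False by (auto simp: Ev_def E_def)
    qed
    moreover have "{\<omega>\<in>space M. \<not> (\<exists>n\<ge>1. real n * a \<le> Sg g n (path \<omega>))} \<in> null_sets M"
      using H by (subst (asm) AE_iff_null) (auto, measurable)
    moreover have "(\<Inter>K. Ev K) \<in> sets M" using Ev_m by auto
    ultimately have "(\<Inter>K. Ev K) \<in> null_sets M"
      using null_sets_subset by blast
    then show ?thesis by (simp add: measure_def emeasure_eq_0_AE null_sets_def)
  qed
  ultimately have lim: "(\<lambda>K. measure M (Ev K)) \<longlonglongrightarrow> 0" by simp
  define k where "k = (\<integral>\<omega>. g (path \<omega>) \<partial>M)"
  have key: "a \<le> k + a * measure M (Ev K)" if K1: "1 \<le> K" for K
  proof -
    define G where "G f = g f + a * indicator (E K) f" for f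
    have G_m[measurable]: "G \<in> borel_measurable (PP TYPE('a))" unfolding G_def by measurable
    have G_b: "\<bar>G f\<bar> \<le> 1 + a" for f using gb[of f] a0 by (auto simp: G_def indicator_def)
    have G_nn: "0 \<le> G f" for f using gb[of f] a0 by (auto simp: G_def indicator_def)
    have IG: "(\<integral>\<omega>. G (path \<omega>) \<partial>M) = k + a * measure M (Ev K)"
    proof -
      have "(\<integral>\<omega>. G (path \<omega>) \<partial>M) = (\<integral>\<omega>. g (path \<omega>) \<partial>M) + (\<integral>\<omega>. a * indicator (Ev K) \<omega> \<partial>M)"
        unfolding G_def
      proof (subst Bochner_Integration.integral_add[symmetric])
        show "integrable M (\<lambda>\<omega>. g (path \<omega>))" using gb by (intro int_bound(2)[where c=1]) auto
        show "integrable M (\<lambda>\<omega>. a * indicator (Ev K) \<omega>)"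
          using Ev_m[of K] by (intro P.integrable_const_bound[where B="\<bar>a\<bar>"]) (auto simp: indicator_def)
      qed (intro Bochner_Integration.integral_cong, auto simp: Ev_def indicator_def)
      also have "(\<integral>\<omega>. a * indicator (Ev K) \<omega> \<partial>M) = a * measure M (Ev K)"
        using Ev_m[of K] by (simp add: P.emeasure_eq_measure)
      finally show ?thesis by (simp add: k_def)
    qed
    have pw: "(real N - real K) * a \<le> (\<Sum>i<N. G (sh i (path \<omega>)))" for N \<omega>
    proof (rule greedy[OF G_nn less_imp_le[OF a0]])
      fix m
      show "\<exists>n. 1 \<le> n \<and> n \<le> K \<and> real n * a \<le> (\<Sum>i<n. G (sh (m + i) (path \<omega>)))"
      proof (cases "sh m (path \<omega>) \<in> E K")
        case True
        then have "a \<le> G (sh m (path \<omega>))" using gb by (auto simp: G_def)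
        then show ?thesis using K1 by (intro exI[of _ 1]) auto
      next
        case False
        then obtain n where n: "1 \<le> n" "n \<le> K" "real n * a \<le> Sg g n (sh m (path \<omega>))"
          by (auto simp: E_def not_less)
        have "Sg g n (sh m (path \<omega>)) \<le> (\<Sum>i<n. G (sh (m + i) (path \<omega>)))"
          unfolding Sg_def sh_sh using a0 by (intro sum_mono) (auto simp: G_def)
        then show ?thesis using n by (intro exI[of _ n]) auto
      qed
    qed
    have "(real N - real K) * a \<le> real N * (k + a * measure M (Ev K))" for N
    proof -
      have "(real N - real K) * a = (\<integral>\<omega>. (real N - real K) * a \<partial>M)" by (simp add: P.prob_space)
      also have "\<dots> \<le> (\<integral>\<omega>. (\<Sum>i<N. G (sh i (path \<omega>))) \<partial>M)"
        by (rule integral_mono) (use pw int_bound(1)[OF G_m G_b] in auto)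
      also have "\<dots> = (\<Sum>i<N. (\<integral>\<omega>. G (sh i (path \<omega>)) \<partial>M))"
        by (rule Bochner_Integration.integral_sum) (use int_bound(1)[OF G_m G_b] in auto)
      also have "\<dots> = (\<Sum>i<N. (\<integral>\<omega>. G (path \<omega>) \<partial>M))"
        by (intro sum.cong refl stat_int G_m)
      also have "\<dots> = real N * (k + a * measure M (Ev K))" using IG by simp
      finally show ?thesis .
    qed
    then show ?thesis
    proof (rule_tac ccontr)
      assume A: "\<And>N. (real N - real K) * a \<le> real N * (k + a * measure M (Ev K))"
        and "\<not> a \<le> k + a * measure M (Ev K)"
      then have d: "0 < a - (k + a * measure M (Ev K))" by simp
      obtain N :: nat where N: "real K * a / (a - (k + a * measure M (Ev K))) < real N"
        using reals_Archimedean2 by blast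
      have "real K * a < real N * (a - (k + a * measure M (Ev K)))"
        using N d by (simp add: field_simps)
      then show False using A[of N] by (simp add: algebra_simps)
    qed
  qed
  have "(\<lambda>K. k + a * measure M (Ev K)) \<longlonglongrightarrow> k + a * 0" by (intro tendsto_intros lim)
  then have "a \<le> k + a * 0"
    by (rule LIMSEQ_le_const) (use key in \<open>auto intro: exI[of _ 1]\<close>)
  then show ?thesis by (simp add: k_def)
qed

lemma arith1:
  fixes S0 gf c d :: real and N :: nat
  assumes d: "1 \<le> d" and N: "4 * d \<le> real N" and c: "0 \<le> c" and g: "gf \<le> 1"
    and H: "(real N + 1) * (c - 1 / (2 * d)) \<le> gf + S0"
  shows "real N * (c - 1 / d) \<le> S0"
proof -
  define u where "u = real N / d"
  have u4: "4 \<le> u" using N d by (simp add: u_def field_simps)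
  have e1: "real N * (c - 1 / d) = real N * c - u" by (simp add: u_def field_simps)
  have e2: "(real N + 1) * (c - 1 / (2 * d)) = real N * c + c - u / 2 - 1 / (2 * d)"
    using d by (simp add: u_def field_simps)
  have e3: "1 / (2 * d) \<le> 1 / 2" using d by (simp add: field_simps)
  show ?thesis using H e1 e2 e3 u4 c g by linarith
qed

lemma arith2:
  fixes S0 gf c d :: real and N :: nat
  assumes d: "1 \<le> d" and N: "4 * d \<le> real N" and c: "c \<le> 2" and g: "0 \<le> gf"
    and H: "real N * (c - 1 / (2 * d)) \<le> S0"
  shows "(real N + 1) * (c - 1 / d) \<le> gf + S0"
proof -
  define u where "u = real N / d"
  have u4: "4 \<le> u" using N d by (simp add: u_def field_simps)
  have e1: "(real N + 1) * (c - 1 / d) = real N * c + c - u - 1 / d" using d by (simp add: u_def field_simps)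
  have e2: "real N * (c - 1 / (2 * d)) = real N * c - u / 2"
    using d by (simp add: u_def field_simps)
  have e3: "0 \<le> 1 / d" using d by simp
  show ?thesis using H e1 e2 e3 u4 c g by linarith
qed

lemma upper:
  assumes gm[measurable]: "g \<in> borel_measurable (PP TYPE('a))" and gb: "\<And>f. 0 \<le> g f \<and> g f \<le> 1"
    and \<epsilon>: "0 < \<epsilon>" "\<epsilon> \<le> 1"
  shows "AE \<omega> in M. \<exists>K. \<forall>N\<ge>K. Sg g N (path \<omega>) \<le> real N * ((\<integral>\<omega>. g (path \<omega>) \<partial>M) + \<epsilon>)"
proof -
  define k where "k = (\<integral>\<omega>. g (path \<omega>) \<partial>M)"
  have k0: "0 \<le> k" unfolding k_def using gb by (intro Bochner_Integration.integral_nonneg) auto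
  have k1: "k \<le> 1"
  proof -
    have "k \<le> (\<integral>\<omega>. 1 \<partial>M)" unfolding k_def
      by (rule integral_mono) (use gb int_bound(2)[OF gm, of 1] in auto)
    then show ?thesis by (simp add: P.prob_space)
  qed
  define c where "c = k + \<epsilon>"
  have c0: "0 \<le> c" "c \<le> 2" using k0 k1 \<epsilon> by (auto simp: c_def)
  define W where "W = {f. \<forall>j::nat. \<forall>K::nat. \<exists>N\<ge>K. real N * (c - 1 / (real j + 1)) \<le> Sg g N f}"
  have W_m: "W \<in> sets (PP TYPE('a))"
  proof -
    have "W = {f\<in>space (PP TYPE('a)). \<forall>j::nat. \<forall>K::nat. \<exists>N. K \<le> N \<and> real N * (c - 1 / (real j + 1)) \<le> Sg g N f}"
      by (auto simp: W_def space_PiM)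
    also have "\<dots> \<in> sets (PP TYPE('a))" by measurable
    finally show ?thesis .
  qed
  have shS: "(\<lambda>n. f (Suc n)) = sh 1 f" for f :: "nat \<Rightarrow> 'a" by (simp add: sh_def)
  have W_inv: "f \<in> W \<longleftrightarrow> (\<lambda>n. f (Suc n)) \<in> W" for f
  proof
    assume fW: "f \<in> W"
    show "(\<lambda>n. f (Suc n)) \<in> W" unfolding W_def shS
    proof (intro CollectI allI)
      fix j K :: nat
      define d where "d = real j + 1"
      have d1: "1 \<le> d" by (simp add: d_def)
      obtain N' where N': "N' \<ge> K + 4 * (j + 1) + 1" "real N' * (c - 1 / (real (2*j+1) + 1)) \<le> Sg g N' f"
        using fW unfolding W_def by blast
      obtain N where NN: "N' = Suc N" using N'(1) by (cases N') auto
      have e: "real (2*j+1) + 1 = 2 * d" by (simp add: d_def)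
      have H: "(real N + 1) * (c - 1 / (2 * d)) \<le> g f + Sg g N (sh 1 f)"
        using N'(2) unfolding NN Sg_Suc e by (simp add: add.commute)
      have "real N * (c - 1 / d) \<le> Sg g N (sh 1 f)"
        by (rule arith1[OF d1 _ c0(1) _ H]) (use N'(1) NN gb[of f] in \<open>auto simp: d_def\<close>)
      moreover have "K \<le> N" using N'(1) NN by simp
      ultimately show "\<exists>N\<ge>K. real N * (c - 1 / (real j + 1)) \<le> Sg g N (sh 1 f)"
        unfolding d_def by blast
    qed
  next
    assume fW: "(\<lambda>n. f (Suc n)) \<in> W"
    show "f \<in> W" unfolding W_def
    proof (intro CollectI allI)
      fix j K :: nat
      define d where "d = real j + 1"
      have d1: "1 \<le> d" by (simp add: d_def)
      obtain N where N: "N \<ge> K + 4 * (j + 1)" "real N * (c - 1 / (real (2*j+1) + 1)) \<le> Sg g N (sh 1 f)"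
        using fW unfolding W_def shS by blast
      have e: "real (2*j+1) + 1 = 2 * d" by (simp add: d_def)
      have "(real N + 1) * (c - 1 / d) \<le> g f + Sg g N (sh 1 f)"
        by (rule arith2[OF d1 _ c0(2) _ N(2)[unfolded e]]) (use N gb[of f] in \<open>auto simp: d_def\<close>)
      then have "real (Suc N) * (c - 1 / d) \<le> Sg g (Suc N) f" unfolding Sg_Suc by (simp add: add.commute)
      moreover have "K \<le> Suc N" using N by simp
      ultimately show "\<exists>N\<ge>K. real N * (c - 1 / (real j + 1)) \<le> Sg g N f"
        unfolding d_def by blast
    qed
  qed
  have Wev: "{\<omega>\<in>space M. path \<omega> \<in> W} \<in> sets M" using W_m by measurable
  have "measure M {\<omega>\<in>space M. (\<lambda>n. Y n \<omega>) \<in> W} \<in> {0, 1}"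
    using erg W_m W_inv unfolding ergodic_process_def by blast
  then have m01: "measure M {\<omega>\<in>space M. path \<omega> \<in> W} \<in> {0, 1}" by (simp add: path_def[abs_def])
  show ?thesis
  proof (cases "measure M {\<omega>\<in>space M. path \<omega> \<in> W} = 1")
    case True
    have AW: "AE \<omega> in M. path \<omega> \<in> W"
      using P.AE_prob_1[OF True] by eventually_elim auto
    obtain j :: nat where j: "1 / (real j + 1) < \<epsilon>"
    proof -
      obtain n where "inverse (real (Suc n)) < \<epsilon>" using \<epsilon>(1) reals_Archimedean by blast
      then show ?thesis using that[of n] by (simp add: field_simps)
    qed
    have "AE \<omega> in M. \<exists>n\<ge>1. real n * (c - 1 / (real j + 1)) \<le> Sg g n (path \<omega>)"
      using AW by eventually_elim (auto simp: W_def)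
    then have "c - 1 / (real j + 1) \<le> k" unfolding k_def by (rule cover[OF gm gb])
    then show ?thesis using j by (simp add: c_def)
  next
    case False
    then have "measure M {\<omega>\<in>space M. path \<omega> \<in> W} = 0" using m01 by auto
    then have "{\<omega>\<in>space M. path \<omega> \<in> W} \<in> null_sets M"
      using Wev by (simp add: P.emeasure_eq_measure null_sets_def)
    then have "AE \<omega> in M. \<omega> \<notin> {\<omega>\<in>space M. path \<omega> \<in> W}" by (rule AE_not_in)
    then show ?thesis using AE_space
    proof eventually_elim
      case (elim \<omega>)
      then have "path \<omega> \<notin> W" by auto
      then obtain j K :: nat where jK: "\<And>N. N \<ge> K \<Longrightarrow> \<not> real N * (c - 1 / (real j + 1)) \<le> Sg g N (path \<omega>)"
        unfolding W_def by auto
      have "Sg g N (path \<omega>) \<le> real N * (k + \<epsilon>)" if "N \<ge> K" for N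
      proof -
        have "Sg g N (path \<omega>) < real N * (c - 1 / (real j + 1))" using jK[OF that] by simp
        also have "\<dots> \<le> real N * c" by (simp add: mult_left_mono)
        finally show ?thesis by (simp add: c_def)
      qed
      then show ?case unfolding k_def by blast
    qed
  qed
qed

lemma birkhoff:
  assumes gm[measurable]: "g \<in> borel_measurable (PP TYPE('a))" and gb: "\<And>f. 0 \<le> g f \<and> g f \<le> 1"
  shows "AE \<omega> in M. (\<lambda>N. Sg g N (path \<omega>) / real N) \<longlonglongrightarrow> (\<integral>\<omega>. g (path \<omega>) \<partial>M)"
proof -
  define k where "k = (\<integral>\<omega>. g (path \<omega>) \<partial>M)"
  define g' where "g' f = 1 - g f" for f
  have g'm[measurable]: "g' \<in> borel_measurable (PP TYPE('a))" unfolding g'_def by measurable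
  have g'b: "0 \<le> g' f \<and> g' f \<le> 1" for f using gb[of f] by (auto simp: g'_def)
  have k': "(\<integral>\<omega>. g' (path \<omega>) \<partial>M) = 1 - k"
    unfolding g'_def k_def using int_bound(2)[OF gm, of 1] gb
    by (subst Bochner_Integration.integral_diff) (auto simp: P.prob_space)
  have Sg': "Sg g' N f = real N - Sg g N f" for N f
    by (simp add: Sg_def g'_def sum_subtractf)
  have eps: "0 < 1 / (real j + 1)" "1 / (real j + 1) \<le> (1::real)" for j :: nat by (auto simp: field_simps)
  have U1: "AE \<omega> in M. \<forall>j::nat. \<exists>K. \<forall>N\<ge>K. Sg g N (path \<omega>) \<le> real N * (k + 1 / (real j + 1))"
    unfolding AE_all_countable k_def using upper[OF gm gb eps] by blast
  have U2: "AE \<omega> in M. \<forall>j::nat. \<exists>K. \<forall>N\<ge>K. Sg g' N (path \<omega>) \<le> real N * ((1 - k) + 1 / (real j + 1))"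
    unfolding AE_all_countable k'[symmetric] using upper[OF g'm g'b eps] by blast
  show ?thesis unfolding k_def[symmetric] using U1 U2
  proof eventually_elim
    case (elim \<omega>)
    show ?case
    proof (rule LIMSEQ_I)
      fix r :: real assume r: "0 < r"
      obtain j :: nat where j: "1 / (real j + 1) < r"
      proof -
        obtain n where "inverse (real (Suc n)) < r" using r reals_Archimedean by blast
        then show ?thesis using that[of n] by (simp add: field_simps)
      qed
      obtain K1 where K1: "\<And>N. N \<ge> K1 \<Longrightarrow> Sg g N (path \<omega>) \<le> real N * (k + 1 / (real j + 1))"
        using elim(1) by blast
      obtain K2 where K2: "\<And>N. N \<ge> K2 \<Longrightarrow> Sg g' N (path \<omega>) \<le> real N * ((1 - k) + 1 / (real j + 1))"
        using elim(2) by blast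
      show "\<exists>no. \<forall>n\<ge>no. norm (Sg g n (path \<omega>) / real n - k) < r"
      proof (intro exI allI impI)
        fix n assume n: "max (max K1 K2) 1 \<le> n"
        then have n0: "0 < real n" by simp
        have a: "Sg g n (path \<omega>) \<le> real n * (k + 1 / (real j + 1))" using K1 n by simp
        have b: "real n - Sg g n (path \<omega>) \<le> real n * ((1 - k) + 1 / (real j + 1))" using K2[of n] n Sg' by simp
        have a': "Sg g n (path \<omega>) / real n \<le> k + 1 / (real j + 1)" using a n0 by (simp add: field_simps)
        have b': "k - 1 / (real j + 1) \<le> Sg g n (path \<omega>) / real n" using b n0 by (simp add: field_simps)
        show "norm (Sg g n (path \<omega>) / real n - k) < r" using a' b' j by (simp add: abs_less_iff)
      qed
    qed
  qed
qed

end


lemma interleave: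
  assumes AB: "A \<inter> B = {}"
    and r1: "reactive X A B m1 \<omega>" and r2: "reactive X A B m2 \<omega>" and lt: "m1 < m2"
  shows "\<exists>t. m1 < t \<and> t < m2 \<and> reactive X B A t \<omega>"
proof -
  obtain j1 where j1: "j1 \<ge> 1" "X (m1 + j1) \<omega> \<in> B" "\<And>i. m1 < i \<and> i < m1 + j1 \<Longrightarrow> X i \<omega> \<notin> A \<union> B"
    using r1 unfolding reactive_def by blast
  have xm2: "X m2 \<omega> \<in> A" using r2 unfolding reactive_def by blast
  have "\<not> m2 < m1 + j1" using j1(3)[of m2] xm2 lt by auto
  moreover have "m2 \<noteq> m1 + j1" using xm2 j1(2) AB by auto
  ultimately have b1: "m1 + j1 < m2" by simp
  define t where "t = (GREATEST t. t < m2 \<and> X t \<omega> \<in> B)"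
  have ex: "m1 + j1 < m2 \<and> X (m1 + j1) \<omega> \<in> B" using b1 j1(2) by simp
  have bnd: "\<forall>y. y < m2 \<and> X y \<omega> \<in> B \<longrightarrow> y \<le> m2" by simp
  have t: "t < m2 \<and> X t \<omega> \<in> B" unfolding t_def
    by (rule GreatestI_nat[where P="\<lambda>t. t < m2 \<and> X t \<omega> \<in> B" and b=m2, OF ex]) auto
  have tmax: "\<And>y. y < m2 \<Longrightarrow> X y \<omega> \<in> B \<Longrightarrow> y \<le> t" unfolding t_def
    by (rule Greatest_le_nat[where P="\<lambda>t. t < m2 \<and> X t \<omega> \<in> B" and b=m2]) auto
  have "m1 + j1 \<le> t" using tmax[of "m1 + j1"] ex by simp
  then have m1t: "m1 < t" using j1(1) by simp
  define s where "s = (LEAST s. t < s \<and> X s \<omega> \<in> A \<union> B)"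
  have exs: "t < m2 \<and> X m2 \<omega> \<in> A \<union> B" using t xm2 by simp
  have s: "t < s \<and> X s \<omega> \<in> A \<union> B" unfolding s_def by (rule LeastI[where P="\<lambda>s. t < s \<and> X s \<omega> \<in> A \<union> B", OF exs])
  have sle: "s \<le> m2" unfolding s_def by (rule Least_le[where P="\<lambda>s. t < s \<and> X s \<omega> \<in> A \<union> B", OF exs])
  have smin: "\<And>i. t < i \<Longrightarrow> i < s \<Longrightarrow> X i \<omega> \<notin> A \<union> B"
    using not_less_Least s_def by blast
  have "X s \<omega> \<notin> B"
  proof
    assume "X s \<omega> \<in> B"
    moreover have "s \<noteq> m2" using calculation xm2 AB by auto
    ultimately have "s \<le> t" using tmax[of s] sle by simp
    then show False using s by simp
  qed
  then have "X s \<omega> \<in> A" using s by simp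
  then have "reactive X B A t \<omega>"
    unfolding reactive_def using t s smin
    by (intro conjI exI[of _ "s - t"]) auto
  then show ?thesis using m1t t by blast
qed

lemma count_le:
  assumes AB: "A \<inter> B = {}"
  shows "card {m. m < N \<and> reactive X A B m \<omega>} \<le> card {m. m < N \<and> reactive X B A m \<omega>} + 1"
proof (cases "{m. m < N \<and> reactive X A B m \<omega>} = {}")
  case True then show ?thesis unfolding True by simp
next
  case False
  define S where "S = {m. m < N \<and> reactive X A B m \<omega>}"
  define T where "T = {m. m < N \<and> reactive X B A m \<omega>}"
  have fS: "finite S" unfolding S_def by simp
  have fT: "finite T" unfolding T_def by simp
  define m0 where "m0 = Min S"
  have m0S: "m0 \<in> S" using False fS unfolding m0_def S_def by (intro Min_in) auto
  have m0le: "\<And>m. m \<in> S \<Longrightarrow> m0 \<le> m" using fS unfolding m0_def by simp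
  define \<phi> where "\<phi> m = (GREATEST t. t < m \<and> reactive X B A t \<omega>)" for m
  have phi: "m0 < \<phi> m \<and> \<phi> m < m \<and> reactive X B A (\<phi> m) \<omega> \<and> (\<forall>t. t < m \<and> reactive X B A t \<omega> \<longrightarrow> t \<le> \<phi> m)"
    if m: "m \<in> S - {m0}" for m
  proof -
    have "m0 < m" using m m0le[of m] by force
    then obtain t where t: "m0 < t" "t < m" "reactive X B A t \<omega>"
      using interleave[OF AB, of X m0 \<omega> m] m m0S by (auto simp: S_def)
    have ex: "t < m \<and> reactive X B A t \<omega>" using t by simp
    have P: "\<phi> m < m \<and> reactive X B A (\<phi> m) \<omega>" unfolding \<phi>_def
      by (rule GreatestI_nat[where P="\<lambda>t. t < m \<and> reactive X B A t \<omega>" and b=m, OF ex]) auto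
    have G: "\<And>y. y < m \<and> reactive X B A y \<omega> \<Longrightarrow> y \<le> \<phi> m" unfolding \<phi>_def
      by (rule Greatest_le_nat[where P="\<lambda>t. t < m \<and> reactive X B A t \<omega>" and b=m]) auto
    have "t \<le> \<phi> m" using G ex by blast
    then show ?thesis using P G t(1) by auto
  qed
  have inj: "inj_on \<phi> (S - {m0})"
  proof (rule inj_onI)
    fix m m' assume m: "m \<in> S - {m0}" and m': "m' \<in> S - {m0}" and eq: "\<phi> m = \<phi> m'"
    show "m = m'"
    proof (rule ccontr)
      assume "m \<noteq> m'"
      then consider "m < m'" | "m' < m" by linarith
      then show False
      proof cases
        case 1
        obtain t where t: "m < t" "t < m'" "reactive X B A t \<omega>"
          using interleave[OF AB, of X m \<omega> m'] m m' 1 by (auto simp: S_def)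
        have "t \<le> \<phi> m'" using phi[OF m'] t by auto
        then show False using phi[OF m] eq t by auto
      next
        case 2
        obtain t where t: "m' < t" "t < m" "reactive X B A t \<omega>"
          using interleave[OF AB, of X m' \<omega> m] m m' 2 by (auto simp: S_def)
        have "t \<le> \<phi> m" using phi[OF m] t by auto
        then show False using phi[OF m'] eq t by auto
      qed
    qed
  qed
  have sub: "\<phi> ` (S - {m0}) \<subseteq> T"
  proof
    fix y assume "y \<in> \<phi> ` (S - {m0})"
    then obtain m where m: "m \<in> S - {m0}" "y = \<phi> m" by auto
    then show "y \<in> T" using phi[OF m(1)] by (auto simp: S_def T_def)
  qed
  have "card (S - {m0}) \<le> card T" using card_inj_on_le[OF inj sub fT] .
  moreover have "card (S - {m0}) = card S - 1" using m0S fS by simp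
  moreover have "card S \<ge> 1" using m0S fS by (metis One_nat_def Suc_leI card_gt_0_iff empty_iff)
  ultimately show ?thesis unfolding S_def T_def by linarith
qed



locale mkXAB = mkX p \<pi> M X + mkAB p \<pi> A B
  for p :: "'a::euclidean_space \<Rightarrow> 'a \<Rightarrow> real" and \<pi> M X A B
begin

interpretation P: prob_space M by (rule M_prob)

definition R :: "(nat \<Rightarrow> 'a) set" where
  "R = {f. f 0 \<in> A \<and> (\<exists>j\<ge>1. f j \<in> B \<and> (\<forall>i. 0 < i \<and> i < j \<longrightarrow> f i \<notin> A \<union> B))}"

lemma R_m[measurable]: "R \<in> sets (PP TYPE('a))"
proof -
  have "R = {f\<in>space (PP TYPE('a)). f 0 \<in> A \<and> (\<exists>j. 1 \<le> j \<and> f j \<in> B \<and> (\<forall>i\<in>{0<..<j}. f i \<notin> A \<union> B))}"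
    by (auto simp: R_def space_PiM)
  also have "\<dots> \<in> sets (PP TYPE('a))" by measurable
  finally show ?thesis .
qed

lemma react_iff: "reactive X A B m \<omega> \<longleftrightarrow> sh m (\<lambda>k. X k \<omega>) \<in> R"
proof
  assume "reactive X A B m \<omega>"
  then obtain j where j: "j \<ge> 1" "X m \<omega> \<in> A" "X (m + j) \<omega> \<in> B" "\<And>i. m < i \<and> i < m + j \<Longrightarrow> X i \<omega> \<notin> A \<union> B"
    unfolding reactive_def by blast
  show "sh m (\<lambda>k. X k \<omega>) \<in> R" unfolding R_def sh_def
  proof (intro CollectI conjI exI[of _ j])
    show "\<forall>i. 0 < i \<and> i < j \<longrightarrow> X (m + i) \<omega> \<notin> A \<union> B" using j(4) by auto
  qed (use j in auto)
next
  assume "sh m (\<lambda>k. X k \<omega>) \<in> R"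
  then obtain j where j: "j \<ge> 1" "X m \<omega> \<in> A" "X (m + j) \<omega> \<in> B" "\<And>i. 0 < i \<and> i < j \<Longrightarrow> X (m + i) \<omega> \<notin> A \<union> B"
    unfolding R_def sh_def by auto
  show "reactive X A B m \<omega>" unfolding reactive_def
  proof (intro conjI exI[of _ j])
    show "\<forall>i. m < i \<and> i < m + j \<longrightarrow> X i \<omega> \<notin> A \<union> B"
    proof (intro allI impI)
      fix i assume "m < i \<and> i < m + j"
      then have "0 < i - m \<and> i - m < j" "m + (i - m) = i" by auto
      then show "X i \<omega> \<notin> A \<union> B" using j(4)[of "i - m"] by simp
    qed
  qed (use j in auto)
qed

lemma num_eq: "real (num_reactive X A B N \<omega>) = Sg (indicator R) N (\<lambda>k. X k \<omega>)"
proof -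
  have "{m. m < N \<and> reactive X A B m \<omega>} = {..<N} \<inter> {m. sh m (\<lambda>k. X k \<omega>) \<in> R}"
    by (auto simp: react_iff)
  then show ?thesis
    unfolding num_reactive_def Sg_def
    by (simp add: indicator_def of_bool_def[symmetric])
qed

definition Cn :: "nat \<Rightarrow> nat \<Rightarrow> 'a set" where
  "Cn n i = (if i = 0 then A else if i \<le> n then - (A \<union> B) else if i = Suc n then B else UNIV)"

definition F where "F n = {\<omega>\<in>space M. \<forall>i\<le>Suc n. X i \<omega> \<in> Cn n i}"

lemma Cn_m: "\<forall>i. Cn n i \<in> sets borel" by (auto simp: Cn_def)

lemma F_m: "F n \<in> sets M"
proof -
  have [measurable]: "Cn n i \<in> sets borel" for i using Cn_m by auto
  show ?thesis unfolding F_def by measurable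
qed

lemma F_meas: "measure M (F n) = (LINT x|lborel. indicator A x * \<pi> x * pt n x)"
proof -
  have "measure M (F n) = (LINT x|lborel. indicator (Cn n 0) x * \<pi> x * path_prob p (Suc n) (\<lambda>i. Cn n (Suc i)) x)"
    unfolding F_def by (rule X_law[OF Cn_m])
  also have "\<dots> = (LINT x|lborel. indicator A x * \<pi> x * pt n x)"
  proof -
    have "path_prob p (Suc n) (\<lambda>i. Cn n (Suc i)) x = pt n x" for x
      unfolding pt_def by (rule pp_cong) (auto simp: Cn_def E_def)
    then show ?thesis by (simp add: Cn_def)
  qed
  finally show ?thesis .
qed

lemma F_disj: "disjoint_family F"
proof (unfold disjoint_family_on_def, intro ballI impI)
  fix n n' :: nat assume "n \<noteq> n'"
  then consider "n < n'" | "n' < n" by linarith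
  then show "F n \<inter> F n' = {}"
  proof cases
    case 1
    show ?thesis
    proof safe
      fix \<omega> assume "\<omega> \<in> F n" "\<omega> \<in> F n'"
      then have "X (Suc n) \<omega> \<in> B" "X (Suc n) \<omega> \<in> - (A \<union> B)"
        using 1 by (auto simp: F_def Cn_def dest!: spec[of _ "Suc n"])
      then show "\<omega> \<in> {}" by simp
    qed
  next
    case 2
    show ?thesis
    proof safe
      fix \<omega> assume "\<omega> \<in> F n" "\<omega> \<in> F n'"
      then have "X (Suc n') \<omega> \<in> B" "X (Suc n') \<omega> \<in> - (A \<union> B)"
        using 2 by (auto simp: F_def Cn_def dest!: spec[of _ "Suc n'"])
      then show "\<omega> \<in> {}" by simp
    qed
  qed
qed

lemma R_union: "{\<omega>\<in>space M. (\<lambda>k. X k \<omega>) \<in> R} = (\<Union>n. F n)"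
proof safe
  fix \<omega> assume \<omega>: "\<omega> \<in> space M" "(\<lambda>k. X k \<omega>) \<in> R"
  then obtain j where j: "j \<ge> 1" "X 0 \<omega> \<in> A" "X j \<omega> \<in> B" "\<And>i. 0 < i \<and> i < j \<Longrightarrow> X i \<omega> \<notin> A \<union> B"
    unfolding R_def by auto
  obtain n where n: "j = Suc n" using j(1) by (cases j) auto
  have "\<omega> \<in> F n" unfolding F_def using \<omega>(1) j n
    by (auto simp: Cn_def le_Suc_eq)
  then show "\<omega> \<in> (\<Union>n. F n)" by blast
next
  fix \<omega> n assume "\<omega> \<in> F n"
  then show "\<omega> \<in> space M" by (simp add: F_def)
next
  fix \<omega> n assume F: "\<omega> \<in> F n"
  have c: "X i \<omega> \<in> Cn n i" if "i \<le> Suc n" for i using F that by (simp add: F_def)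
  show "(\<lambda>k. X k \<omega>) \<in> R" unfolding R_def
  proof (intro CollectI conjI exI[of _ "Suc n"])
    show "X 0 \<omega> \<in> A" using c[of 0] by (simp add: Cn_def)
    show "X (Suc n) \<omega> \<in> B" using c[of "Suc n"] by (simp add: Cn_def)
    show "\<forall>i. 0 < i \<and> i < Suc n \<longrightarrow> X i \<omega> \<notin> A \<union> B"
    proof (intro allI impI)
      fix i assume i: "0 < i \<and> i < Suc n"
      then have "X i \<omega> \<in> Cn n i" by (intro c) simp
      then show "X i \<omega> \<notin> A \<union> B" using i by (simp add: Cn_def)
    qed
  qed simp
qed

lemma probR: "measure M {\<omega>\<in>space M. (\<lambda>k. X k \<omega>) \<in> R} =
  (LINT x|lborel. indicator A x * \<pi> x * (LINT y|lborel. p x y * committor p A B y))"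
proof -
  have s1: "(\<lambda>n. measure M (F n)) sums measure M {\<omega>\<in>space M. (\<lambda>k. X k \<omega>) \<in> R}"
    unfolding R_union by (rule P.finite_measure_UNION) (use F_m F_disj in auto)
  define f where "f n x = indicator A x * \<pi> x * pt n x" for n x
  have fi: "integrable lborel (f n)" for n
  proof -
    have "integrable lborel (\<lambda>x. \<pi> x * (indicator A x * pt n x))"
      by (rule int_ind[where c=1]) (use pt_b in \<open>auto simp: abs_le_iff\<close>)
    then show ?thesis unfolding f_def by (simp add: ac_simps)
  qed
  have fnn: "0 \<le> f n x" for n x unfolding f_def using pt_b[of n x] pi_pos[of x] by (simp add: indicator_def)
  have s2: "(\<lambda>n. integral\<^sup>L lborel (f n)) sums (LINT x|lborel. (\<Sum>n. f n x))"
  proof (rule sums_integral)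
    show "integrable lborel (f n)" for n by (rule fi)
    show "AE x in lborel. summable (\<lambda>n. norm (f n x))"
      using pt_summable fnn unfolding f_def by (auto intro!: summable_mult)
    show "summable (\<lambda>n. LINT x|lborel. norm (f n x))"
      using s1 fnn by (simp add: F_meas f_def[symmetric] sums_iff)
  qed
  have "(\<Sum>n. f n x) = indicator A x * \<pi> x * Q x" for x
    unfolding f_def Q_def using pt_summable by (rule suminf_mult)
  then have "(LINT x|lborel. (\<Sum>n. f n x)) = (LINT x|lborel. indicator A x * \<pi> x * (LINT y|lborel. p x y * committor p A B y))"
    by (simp add: TQ)
  moreover have "(\<lambda>n. integral\<^sup>L lborel (f n)) = (\<lambda>n. measure M (F n))"
    by (simp add: F_meas f_def[abs_def])
  ultimately show ?thesis using s1 s2 sums_unique2 by metis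
qed

end


lemma count_lim:
  fixes a b :: "nat \<Rightarrow> nat"
  assumes ab: "\<And>N. a N \<le> b N + 1" and ba: "\<And>N. b N \<le> a N + 1"
    and lim: "(\<lambda>N. real (a N) / real N) \<longlonglongrightarrow> k"
  shows "(\<lambda>N. real (b N) / real N) \<longlonglongrightarrow> k"
proof -
  have d: "(\<lambda>N. (real (b N) - real (a N)) / real N) \<longlonglongrightarrow> 0"
  proof (rule Lim_null_comparison[where g="\<lambda>N. 1 / real N"])
    show "\<forall>\<^sub>F N in sequentially. norm ((real (b N) - real (a N)) / real N) \<le> 1 / real N"
    proof (intro always_eventually allI)
      fix N
      have "\<bar>real (b N) - real (a N)\<bar> \<le> 1" using ab[of N] ba[of N] by linarith
      then show "norm ((real (b N) - real (a N)) / real N) \<le> 1 / real N"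
        by (simp add: divide_right_mono)
    qed
    show "(\<lambda>N. 1 / real N) \<longlonglongrightarrow> 0" by (rule lim_1_over_n)
  qed
  have "(\<lambda>N. real (a N) / real N + (real (b N) - real (a N)) / real N) \<longlonglongrightarrow> k + 0"
    by (intro tendsto_add lim d)
  then show ?thesis by (simp add: diff_divide_distrib)
qed

theorem proposition2p6:
  fixes p :: "real^'d \<Rightarrow> real^'d \<Rightarrow> real"
    and \<pi> :: "real^'d \<Rightarrow> real"
    and M :: "'w measure"
    and X :: "nat \<Rightarrow> 'w \<Rightarrow> real^'d"
    and A B :: "(real^'d) set"
  assumes p_meas: "(\<lambda>(x, y). p x y) \<in> borel_measurable (borel \<Otimes>\<^sub>M borel)"
    and p_pos: "\<And>x y. p x y > 0"
    and p_int: "\<And>x. integrable lborel (p x)"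
    and p_norm: "\<And>x. (LINT y|lborel. p x y) = 1"
    and pi_meas: "\<pi> \<in> borel_measurable borel"
    and pi_pos: "\<And>x. \<pi> x > 0"
    and pi_int: "integrable lborel \<pi>"
    and pi_norm: "(LINT x|lborel. \<pi> x) = 1"
    and pi_invariant: "AE y in lborel. (LINT x|lborel. \<pi> x * p x y) = \<pi> y"
    and unique_invariant: "\<And>\<nu>. prob_space \<nu> \<Longrightarrow> sets \<nu> = sets borel \<Longrightarrow>
          (\<forall>C\<in>sets borel. measure \<nu> C = (\<integral>x. (LINT y|lborel. indicator C y * p x y) \<partial>\<nu>)) \<Longrightarrow>
          \<nu> = density lborel \<pi>"
    and M_prob: "prob_space M"
    and X_meas: "\<And>n. X n \<in> borel_measurable M"
    and X_law: "\<And>n C. (\<forall>i. C i \<in> sets borel) \<Longrightarrow>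
          measure M {\<omega>\<in>space M. \<forall>i\<le>n. X i \<omega> \<in> C i} =
          (LINT x|lborel. indicator (C 0) x * \<pi> x * path_prob p n (\<lambda>i. C (Suc i)) x)"
    and X_ergodic: "ergodic_process M X"
    and A_closed: "closed A" and B_closed: "closed B"
    and A_smooth: "smooth_boundary A" and B_smooth: "smooth_boundary B"
    and AB_disj: "A \<inter> B = {}"
    and AB_compl: "- (A \<union> B) \<noteq> {}"
  shows "let q = committor p A B;
             kAB = (LINT x|lborel. indicator A x * \<pi> x * (LINT y|lborel. p x y * q y))
         in (AE \<omega> in M. (\<lambda>N. real (num_reactive X A B N \<omega>) / real N) \<longlonglongrightarrow> kAB)
          \<and> (AE \<omega> in M. (\<lambda>N. real (num_reactive X B A N \<omega>) / real N) \<longlonglongrightarrow> kAB)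
          \<and> kAB = (LINT x|lborel. indicator B x * \<pi> x * (LINT y|lborel. p x y * (1 - q y)))
          \<and> kAB = 1/2 * (LINT x|lborel. \<pi> x * (LINT y|lborel. p x y * (q y - q x)^2))"
proof -
  interpret mkXAB p \<pi> M X A B
    using assms by (intro mkXAB.intro mkX.intro mkX_axioms.intro mkAB.intro mkAB_axioms.intro mk.intro;
      (assumption | simp add: borel_closed))
  interpret P: prob_space M by (rule M_prob)
  have E: "ergp M X"
  proof (rule ergp.intro)
    show "prob_space M" by (rule M_prob)
    show "X n \<in> borel_measurable M" for n by (rule X_meas)
    show "distr M (PP TYPE(real^'d)) (\<lambda>\<omega> k. X (m + k) \<omega>) = distr M (PP TYPE(real^'d)) (\<lambda>\<omega> k. X k \<omega>)" for m
      by (rule stationary)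
    show "ergodic_process M X" by (rule X_ergodic)
  qed
  interpret ergp M X by (rule E)
  define kAB where "kAB = (LINT x|lborel. indicator A x * \<pi> x * (LINT y|lborel. p x y * committor p A B y))"
  have gm: "indicator R \<in> borel_measurable (PP TYPE(real^'d))" by measurable
  have gb: "0 \<le> (indicator R f :: real) \<and> indicator R f \<le> (1::real)" for f by (simp add: indicator_def)
  have pth: "path \<omega> = (\<lambda>k. X k \<omega>)" for \<omega> by (simp add: path_def)
  have int: "(\<integral>\<omega>. indicator R (path \<omega>) \<partial>M) = kAB"
  proof -
    have ev: "{\<omega>\<in>space M. (\<lambda>k. X k \<omega>) \<in> R} \<in> sets M"
      using path_meas unfolding pth[abs_def] by measurable
    have "(\<integral>\<omega>. indicator R (path \<omega>) \<partial>M) = (\<integral>\<omega>. indicator {\<omega>\<in>space M. (\<lambda>k. X k \<omega>) \<in> R} \<omega> \<partial>M)"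
      by (intro Bochner_Integration.integral_cong refl) (auto simp: indicator_def pth)
    also have "\<dots> = measure M {\<omega>\<in>space M. (\<lambda>k. X k \<omega>) \<in> R}"
      using ev by (simp add: P.emeasure_eq_measure)
    also have "\<dots> = kAB" unfolding kAB_def by (rule probR)
    finally show ?thesis .
  qed
  have c1: "AE \<omega> in M. (\<lambda>N. real (num_reactive X A B N \<omega>) / real N) \<longlonglongrightarrow> kAB"
    using birkhoff[OF gm gb] unfolding int by (simp add: num_eq pth)
  have c2: "AE \<omega> in M. (\<lambda>N. real (num_reactive X B A N \<omega>) / real N) \<longlonglongrightarrow> kAB"
    using c1
  proof eventually_elim
    case (elim \<omega>)
    show ?case
    proof (rule count_lim[OF _ _ elim])
      show "num_reactive X A B N \<omega> \<le> num_reactive X B A N \<omega> + 1" for N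
        unfolding num_reactive_def by (rule count_le[OF AB_disj])
      have "B \<inter> A = {}" using AB_disj by auto
      then show "num_reactive X B A N \<omega> \<le> num_reactive X A B N \<omega> + 1" for N
        unfolding num_reactive_def by (rule count_le)
    qed
  qed
  show ?thesis
    unfolding Let_def kAB_def[symmetric]
    using c1 c2 claimB claimE unfolding kAB_def by auto
qed


end
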